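(* Let $G=H\times K$ with $H$ and $K$ nontrivial finite groups. Then $$\mathcal{D}(G)\ge (\mathcal{D}(H)+2)(\mathcal{D}(K)+2)-2,$$ with equality if and only if $H$ and $K$ are both nilpotent and $\gcd(|H|,|K|)=1$.
   Context: $\mathcal{D}(X)$ denotes the number of conjugacy classes of nontrivial subgroups $Y$ of the finite group $X$ with $N_X(Y)\neq Y$. *)

theory Defs
  imports "HOL-Algebra.Algebra"
begin

definition subgroup_conj_class :: "('a, 'b) monoid_scheme \<Rightarrow> 'a set \<Rightarrow> 'a set set" where
  "subgroup_conj_class G Y = {r_coset G (l_coset G g Y) (m_inv G g) | g. g \<in> carrier G}"

definition D_count :: "('a, 'b) monoid_scheme \<Rightarrow> nat" where
  "D_count G = card {subgroup_conj_class G Y | Y.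
      subgroup Y G \<and> Y \<noteq> {\<one>\<^bsub>G\<^esub>} \<and> normalizer G Y \<noteq> Y}"

definition lower_central_step :: "('a, 'b) monoid_scheme \<Rightarrow> 'a set \<Rightarrow> 'a set" where
  "lower_central_step G H = generate G
     {h \<otimes>\<^bsub>G\<^esub> g \<otimes>\<^bsub>G\<^esub> inv\<^bsub>G\<^esub> h \<otimes>\<^bsub>G\<^esub> inv\<^bsub>G\<^esub> g | h g. h \<in> H \<and> g \<in> carrier G}"

definition nilpotent_group :: "('a, 'b) monoid_scheme \<Rightarrow> bool" where
  "nilpotent_group G \<longleftrightarrow> group G \<and>
     (\<exists>n. (lower_central_step G ^^ n) (carrier G) = {\<one>\<^bsub>G\<^esub>})"

end

theory Submission
  imports Defs "HOL-Computational_Algebra.Primes"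
begin


context group begin

lemma mult_inv_cancel_r [simp]: "x \<in> carrier G \<Longrightarrow> g \<in> carrier G \<Longrightarrow> x \<otimes> g \<otimes> inv g = x"
  by (simp add: m_assoc)

lemma mult_inv_cancel_r2 [simp]: "x \<in> carrier G \<Longrightarrow> g \<in> carrier G \<Longrightarrow> x \<otimes> inv g \<otimes> g = x"
  by (simp add: m_assoc)

lemma conj_image:
  assumes "A \<subseteq> carrier G" "g \<in> carrier G"
  shows "(g <# A) #> inv g = (\<lambda>a. g \<otimes> a \<otimes> inv g) ` A"
  unfolding l_coset_def r_coset_def by auto

lemma normalizer_iff:
  assumes "A \<subseteq> carrier G"
  shows "g \<in> normalizer G A \<longleftrightarrow> g \<in> carrier G \<and> (g <# A) #> inv g = A"
  using assms unfolding normalizer_def stabilizer_def by auto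

lemma normalizer_iff2:
  assumes "A \<subseteq> carrier G"
  shows "g \<in> normalizer G A \<longleftrightarrow> g \<in> carrier G \<and> (\<lambda>a. g \<otimes> a \<otimes> inv g) ` A = A"
  using assms normalizer_iff conj_image by auto

lemma conj_subset:
  assumes "A \<subseteq> carrier G" "g \<in> carrier G"
  shows "(g <# A) #> inv g \<subseteq> carrier G"
  using assms conj_image by auto

lemma conj_comp:
  assumes "A \<subseteq> carrier G" "g \<in> carrier G" "h \<in> carrier G"
  shows "(g <# ((h <# A) #> inv h)) #> inv g = ((g \<otimes> h) <# A) #> inv (g \<otimes> h)"
proof -
  have "(\<lambda>a. g \<otimes> a \<otimes> inv g) ` (\<lambda>a. h \<otimes> a \<otimes> inv h) ` A = (\<lambda>a. (g \<otimes> h) \<otimes> a \<otimes> inv (g \<otimes> h)) ` A"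
    unfolding image_image
    apply (rule image_cong[OF refl])
    using assms by (auto simp: m_assoc inv_mult_group)
  moreover have "(\<lambda>a. h \<otimes> a \<otimes> inv h) ` A \<subseteq> carrier G" using assms by auto
  ultimately show ?thesis using assms by (simp add: conj_image)
qed

lemma conj_one: "A \<subseteq> carrier G \<Longrightarrow> (\<one> <# A) #> \<one> = A"
  by (simp add: lcos_mult_one l_coset_subset_G)

lemma conj_inv_cancel:
  assumes "A \<subseteq> carrier G" "g \<in> carrier G"
  shows "(inv g <# ((g <# A) #> inv g)) #> inv (inv g) = A"
  using conj_comp[of A "inv g" g] assms by (simp add: conj_one)

lemma conj_card:
  assumes "A \<subseteq> carrier G" "g \<in> carrier G"
  shows "card ((g <# A) #> inv g) = card A"
proof -
  have "inj_on (\<lambda>a. g \<otimes> a \<otimes> inv g) A"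
    using assms by (auto intro!: inj_onI simp: subset_iff)
  then show ?thesis using assms by (simp add: conj_image card_image)
qed

lemma conj_subgroup_self:
  assumes "subgroup A G" "a \<in> A"
  shows "(a <# A) #> inv a = A"
proof -
  have sub: "A \<subseteq> carrier G" "a \<in> carrier G" using assms subgroup.subset by blast+
  have "(\<lambda>x. a \<otimes> x \<otimes> inv a) ` A = A"
  proof
    show "(\<lambda>x. a \<otimes> x \<otimes> inv a) ` A \<subseteq> A" using assms
      by (auto intro!: subgroup.m_closed subgroup.m_inv_closed)
    show "A \<subseteq> (\<lambda>x. a \<otimes> x \<otimes> inv a) ` A"
    proof
      fix y assume y: "y \<in> A"
      have "inv a \<otimes> y \<otimes> a \<in> A" using assms y by (auto intro!: subgroup.m_closed subgroup.m_inv_closed)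
      moreover have "y = a \<otimes> (inv a \<otimes> y \<otimes> a) \<otimes> inv a"
        using sub y by (simp add: m_assoc subset_iff) (metis m_assoc inv_closed r_inv r_one l_inv l_one subsetD)
      ultimately show "y \<in> (\<lambda>x. a \<otimes> x \<otimes> inv a) ` A" by blast
    qed
  qed
  then show ?thesis using sub by (simp add: conj_image)
qed

lemma normalizer_carrier: "normalizer G (carrier G) = carrier G"
proof -
  have "\<And>g. g \<in> carrier G \<Longrightarrow> (g <# carrier G) #> inv g = carrier G"
    using conj_subgroup_self[OF subgroup_self] by blast
  then show ?thesis using normalizer_iff[of "carrier G"] by auto
qed

lemma normalizer_one: "normalizer G {\<one>} = carrier G"
proof -
  have "\<And>g. g \<in> carrier G \<Longrightarrow> (g <# {\<one>}) #> inv g = {\<one>}"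
    by (simp add: conj_image)
  then show ?thesis using normalizer_iff[of "{\<one>}"] by auto
qed

lemma normalizer_conj:
  assumes "A \<subseteq> carrier G" "g \<in> carrier G"
  shows "normalizer G ((g <# A) #> inv g) = (g <# normalizer G A) #> inv g"
proof -
  have NA: "normalizer G A \<subseteq> carrier G" using normalizer_iff[OF assms(1)] by auto
  have cs: "(g <# A) #> inv g \<subseteq> carrier G" using assms conj_subset by auto
  have "x \<in> normalizer G ((g <# A) #> inv g) \<longleftrightarrow> x \<in> (\<lambda>y. g \<otimes> y \<otimes> inv g) ` normalizer G A" for x
  proof
    assume x: "x \<in> normalizer G ((g <# A) #> inv g)"
    then have xc: "x \<in> carrier G" and xe: "(x <# ((g <# A) #> inv g)) #> inv x = (g <# A) #> inv g"
      using normalizer_iff[OF cs] by auto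
    let ?y = "inv g \<otimes> x \<otimes> g"
    have yc: "?y \<in> carrier G" using xc assms by auto
    have e1: "(x <# ((g <# A) #> inv g)) #> inv x = ((x \<otimes> g) <# A) #> inv (x \<otimes> g)"
      by (rule conj_comp) (use assms xc in auto)
    have e2: "(inv g <# (((x \<otimes> g) <# A) #> inv (x \<otimes> g))) #> inv (inv g) = ((inv g \<otimes> (x \<otimes> g)) <# A) #> inv (inv g \<otimes> (x \<otimes> g))"
      by (rule conj_comp) (use assms xc in auto)
    have e3: "inv g \<otimes> (x \<otimes> g) = ?y" using assms xc by (simp add: m_assoc)
    have "(?y <# A) #> inv ?y = (inv g <# ((x <# ((g <# A) #> inv g)) #> inv x)) #> inv (inv g)"
      using e1 e2 e3 by simp
    also have "\<dots> = A" using xe conj_inv_cancel[OF assms] by simp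
    finally have "?y \<in> normalizer G A" using normalizer_iff[OF assms(1)] yc by auto
    moreover have "x = g \<otimes> ?y \<otimes> inv g" using xc assms by (simp add: m_assoc[symmetric])
    ultimately show "x \<in> (\<lambda>y. g \<otimes> y \<otimes> inv g) ` normalizer G A" by blast
  next
    assume "x \<in> (\<lambda>y. g \<otimes> y \<otimes> inv g) ` normalizer G A"
    then obtain y where y: "y \<in> normalizer G A" and xy: "x = g \<otimes> y \<otimes> inv g" by blast
    have yc: "y \<in> carrier G" and ye: "(y <# A) #> inv y = A" using y normalizer_iff[OF assms(1)] by auto
    have xc: "x \<in> carrier G" using xy yc assms by auto
    have "(x <# ((g <# A) #> inv g)) #> inv x = ((x \<otimes> g) <# A) #> inv (x \<otimes> g)"
      using assms xc by (simp add: conj_comp)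
    also have "x \<otimes> g = g \<otimes> y" using xy yc assms by (simp add: m_assoc)
    also have "((g \<otimes> y) <# A) #> inv (g \<otimes> y) = (g <# ((y <# A) #> inv y)) #> inv g"
      using assms yc by (simp add: conj_comp)
    finally show "x \<in> normalizer G ((g <# A) #> inv g)" using ye normalizer_iff[OF cs] xc by auto
  qed
  then show ?thesis using NA assms by (auto simp: conj_image)
qed

lemma normalizer_conj_self_iff:
  assumes "A \<subseteq> carrier G" "g \<in> carrier G"
  shows "normalizer G ((g <# A) #> inv g) = (g <# A) #> inv g \<longleftrightarrow> normalizer G A = A"
proof -
  have NA: "normalizer G A \<subseteq> carrier G" using normalizer_iff[OF assms(1)] by auto
  show ?thesis using normalizer_conj[OF assms] subgroup_conjugation_is_inj[OF assms(2) NA assms(1)] by auto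
qed


end

context group begin
abbreviation cls where "cls A \<equiv> subgroup_conj_class G A"

lemma self_in_cls: "A \<subseteq> carrier G \<Longrightarrow> A \<in> cls A"
proof -
  assume "A \<subseteq> carrier G"
  then have "(\<one> <# A) #> inv \<one> = A" using conj_one by simp
  then show ?thesis unfolding subgroup_conj_class_def using one_closed by blast
qed

lemma cls_one: "cls {\<one>} = {{\<one>}}"
proof -
  have "\<And>g. g \<in> carrier G \<Longrightarrow> (g <# {\<one>}) #> inv g = {\<one>}" by (simp add: conj_image)
  then show ?thesis unfolding subgroup_conj_class_def using one_closed by blast
qed

lemma cls_carrier: "cls (carrier G) = {carrier G}"
  unfolding subgroup_conj_class_def using conj_subgroup_self[OF subgroup_self] by auto

lemma cls_memD:
  assumes "subgroup A G" "B \<in> cls A"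
  shows "subgroup B G" "B = {\<one>} \<longleftrightarrow> A = {\<one>}" "normalizer G B = B \<longleftrightarrow> normalizer G A = A"
    "B = carrier G \<longleftrightarrow> A = carrier G" "cls B = cls A"
proof -
  have As: "A \<subseteq> carrier G" using assms subgroup.subset by blast
  obtain g where g: "g \<in> carrier G" and B: "B = (g <# A) #> inv g"
    using assms unfolding subgroup_conj_class_def by auto
  show "subgroup B G" using B g assms subgroup_conjugation_is_surj2 by auto
  have c1: "(g <# {\<one>}) #> inv g = {\<one>}" using g by (simp add: conj_image)
  have one_sub: "{\<one>} \<subseteq> carrier G" by simp
  show "B = {\<one>} \<longleftrightarrow> A = {\<one>}"
    using B c1 subgroup_conjugation_is_inj[OF g As one_sub] by metis
  show "normalizer G B = B \<longleftrightarrow> normalizer G A = A"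
    using B normalizer_conj_self_iff[OF As g] by simp
  have c2: "(g <# carrier G) #> inv g = carrier G" using conj_subgroup_self[OF subgroup_self g] .
  show "B = carrier G \<longleftrightarrow> A = carrier G"
    using B c2 subgroup_conjugation_is_inj[OF g As order_refl] by metis
  show "cls B = cls A"
  proof
    show "cls B \<subseteq> cls A"
    proof
      fix C assume "C \<in> cls B"
      then obtain h where h: "h \<in> carrier G" and C: "C = (h <# B) #> inv h"
        unfolding subgroup_conj_class_def by auto
      have "C = ((h \<otimes> g) <# A) #> inv (h \<otimes> g)" using C B conj_comp[OF As h g] by simp
      then show "C \<in> cls A" unfolding subgroup_conj_class_def using g h by blast
    qed
    show "cls A \<subseteq> cls B"
    proof
      fix C assume "C \<in> cls A"
      then obtain h where h: "h \<in> carrier G" and C: "C = (h <# A) #> inv h"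
        unfolding subgroup_conj_class_def by auto
      have hg: "h \<otimes> inv g \<in> carrier G" using g h by simp
      have "((h \<otimes> inv g) <# B) #> inv (h \<otimes> inv g) = ((h \<otimes> inv g \<otimes> g) <# A) #> inv (h \<otimes> inv g \<otimes> g)"
        using B conj_comp[OF As hg g] by simp
      also have "h \<otimes> inv g \<otimes> g = h" using g h by simp
      finally have "C = ((h \<otimes> inv g) <# B) #> inv (h \<otimes> inv g)" using C by simp
      then show "C \<in> cls B" unfolding subgroup_conj_class_def using g h by blast
    qed
  qed
qed

end

lemma prod_conj:
  assumes "group H" "group K" "A \<subseteq> carrier H" "B \<subseteq> carrier K" "h \<in> carrier H" "k \<in> carrier K"
  shows "((h, k) <#\<^bsub>H \<times>\<times> K\<^esub> (A \<times> B)) #>\<^bsub>H \<times>\<times> K\<^esub> inv\<^bsub>H \<times>\<times> K\<^esub> (h, k)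
         = ((h <#\<^bsub>H\<^esub> A) #>\<^bsub>H\<^esub> inv\<^bsub>H\<^esub> h) \<times> ((k <#\<^bsub>K\<^esub> B) #>\<^bsub>K\<^esub> inv\<^bsub>K\<^esub> k)"
proof -
  interpret H: group H by fact
  interpret K: group K by fact
  interpret G: group "H \<times>\<times> K" using DirProd_group assms by blast
  have "((h, k) <#\<^bsub>H \<times>\<times> K\<^esub> (A \<times> B)) #>\<^bsub>H \<times>\<times> K\<^esub> inv\<^bsub>H \<times>\<times> K\<^esub> (h, k)
    = (\<lambda>a. (h, k) \<otimes>\<^bsub>H \<times>\<times> K\<^esub> a \<otimes>\<^bsub>H \<times>\<times> K\<^esub> inv\<^bsub>H \<times>\<times> K\<^esub> (h, k)) ` (A \<times> B)"
    using assms by (intro G.conj_image) auto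
  also have "\<dots> = (\<lambda>a. h \<otimes>\<^bsub>H\<^esub> a \<otimes>\<^bsub>H\<^esub> inv\<^bsub>H\<^esub> h) ` A \<times> (\<lambda>b. k \<otimes>\<^bsub>K\<^esub> b \<otimes>\<^bsub>K\<^esub> inv\<^bsub>K\<^esub> k) ` B"
    using assms by (auto simp: image_def)
  finally show ?thesis using assms by (simp add: H.conj_image K.conj_image)
qed

lemma normalizer_prod:
  fixes H :: "('a, 'b) monoid_scheme" and K :: "('c, 'd) monoid_scheme"
  assumes "group H" "group K" "A \<subseteq> carrier H" "B \<subseteq> carrier K" "A \<noteq> {}" "B \<noteq> {}"
  shows "normalizer (H \<times>\<times> K) (A \<times> B) = normalizer H A \<times> normalizer K B"
proof -
  interpret H: group H by fact
  interpret K: group K by fact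
  interpret G: group "H \<times>\<times> K" using DirProd_group assms by blast
  have AB: "A \<times> B \<subseteq> carrier (H \<times>\<times> K)" using assms by auto
  show ?thesis
  proof (rule Set.set_eqI)
    fix x :: "'a \<times> 'c"
    obtain h k where x: "x = (h, k)" by (cases x)
    show "x \<in> normalizer (H \<times>\<times> K) (A \<times> B) \<longleftrightarrow> x \<in> normalizer H A \<times> normalizer K B"
    proof (cases "h \<in> carrier H \<and> k \<in> carrier K")
      case True
      have ne1: "(h <#\<^bsub>H\<^esub> A) #>\<^bsub>H\<^esub> inv\<^bsub>H\<^esub> h \<noteq> {}" using True assms by (simp add: H.conj_image)
      have ne2: "(k <#\<^bsub>K\<^esub> B) #>\<^bsub>K\<^esub> inv\<^bsub>K\<^esub> k \<noteq> {}" using True assms by (simp add: K.conj_image)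
      show ?thesis unfolding x
        using True prod_conj[OF assms(1-4), of h k] ne1 ne2 assms(5,6)
        by (simp add: times_eq_iff G.normalizer_iff[OF AB] H.normalizer_iff[OF assms(3)] K.normalizer_iff[OF assms(4)])
    next
      case False
      then show ?thesis unfolding x
        by (simp add: G.normalizer_iff[OF AB] H.normalizer_iff[OF assms(3)] K.normalizer_iff[OF assms(4)]; blast)
    qed
  qed
qed

lemma cls_prod:
  assumes "group H" "group K" "A \<subseteq> carrier H" "B \<subseteq> carrier K"
  shows "subgroup_conj_class (H \<times>\<times> K) (A \<times> B) =
         {A' \<times> B' | A' B'. A' \<in> subgroup_conj_class H A \<and> B' \<in> subgroup_conj_class K B}"
proof
  show "subgroup_conj_class (H \<times>\<times> K) (A \<times> B) \<subseteq> {A' \<times> B' | A' B'. A' \<in> subgroup_conj_class H A \<and> B' \<in> subgroup_conj_class K B}"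
  proof
    fix C assume "C \<in> subgroup_conj_class (H \<times>\<times> K) (A \<times> B)"
    then obtain x where x: "x \<in> carrier (H \<times>\<times> K)" and C: "C = (x <#\<^bsub>H \<times>\<times> K\<^esub> (A \<times> B)) #>\<^bsub>H \<times>\<times> K\<^esub> inv\<^bsub>H \<times>\<times> K\<^esub> x"
      unfolding subgroup_conj_class_def by blast
    obtain h k where hk: "x = (h, k)" by (cases x)
    have h: "h \<in> carrier H" and k: "k \<in> carrier K" using x hk by auto
    have "C = ((h <#\<^bsub>H\<^esub> A) #>\<^bsub>H\<^esub> inv\<^bsub>H\<^esub> h) \<times> ((k <#\<^bsub>K\<^esub> B) #>\<^bsub>K\<^esub> inv\<^bsub>K\<^esub> k)"
      using C hk prod_conj[OF assms h k] by simp
    moreover have "(h <#\<^bsub>H\<^esub> A) #>\<^bsub>H\<^esub> inv\<^bsub>H\<^esub> h \<in> subgroup_conj_class H A"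
      unfolding subgroup_conj_class_def using h by blast
    moreover have "(k <#\<^bsub>K\<^esub> B) #>\<^bsub>K\<^esub> inv\<^bsub>K\<^esub> k \<in> subgroup_conj_class K B"
      unfolding subgroup_conj_class_def using k by blast
    ultimately show "C \<in> {A' \<times> B' | A' B'. A' \<in> subgroup_conj_class H A \<and> B' \<in> subgroup_conj_class K B}"
      by blast
  qed
  show "{A' \<times> B' | A' B'. A' \<in> subgroup_conj_class H A \<and> B' \<in> subgroup_conj_class K B} \<subseteq> subgroup_conj_class (H \<times>\<times> K) (A \<times> B)"
  proof
    fix C assume "C \<in> {A' \<times> B' | A' B'. A' \<in> subgroup_conj_class H A \<and> B' \<in> subgroup_conj_class K B}"
    then obtain A' B' where C: "C = A' \<times> B'" and A': "A' \<in> subgroup_conj_class H A" and B': "B' \<in> subgroup_conj_class K B"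
      by blast
    obtain h where h: "h \<in> carrier H" and hA: "A' = (h <#\<^bsub>H\<^esub> A) #>\<^bsub>H\<^esub> inv\<^bsub>H\<^esub> h"
      using A' unfolding subgroup_conj_class_def by blast
    obtain k where k: "k \<in> carrier K" and kB: "B' = (k <#\<^bsub>K\<^esub> B) #>\<^bsub>K\<^esub> inv\<^bsub>K\<^esub> k"
      using B' unfolding subgroup_conj_class_def by blast
    have "C = ((h, k) <#\<^bsub>H \<times>\<times> K\<^esub> (A \<times> B)) #>\<^bsub>H \<times>\<times> K\<^esub> inv\<^bsub>H \<times>\<times> K\<^esub> (h, k)"
      using C hA kB prod_conj[OF assms h k] by simp
    moreover have "(h, k) \<in> carrier (H \<times>\<times> K)" using h k by simp
    ultimately show "C \<in> subgroup_conj_class (H \<times>\<times> K) (A \<times> B)"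
      unfolding subgroup_conj_class_def by blast
  qed
qed


definition Dset :: "('a, 'b) monoid_scheme \<Rightarrow> 'a set set set" where
  "Dset G = {subgroup_conj_class G Y | Y. subgroup Y G \<and> Y \<noteq> {\<one>\<^bsub>G\<^esub>} \<and> normalizer G Y \<noteq> Y}"

definition Fam :: "('a, 'b) monoid_scheme \<Rightarrow> 'a set set set" where
  "Fam G = Dset G \<union> {{{\<one>\<^bsub>G\<^esub>}}, {carrier G}}"

definition Phi :: "'a set set \<Rightarrow> 'c set set \<Rightarrow> ('a \<times> 'c) set set" where
  "Phi c1 c2 = {A' \<times> B' | A' B'. A' \<in> c1 \<and> B' \<in> c2}"

lemma D_count_Dset: "D_count G = card (Dset G)"
  unfolding D_count_def Dset_def by simp

context group begin

lemma cls_subset_Pow: "A \<subseteq> carrier G \<Longrightarrow> cls A \<subseteq> Pow (carrier G)"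
  unfolding subgroup_conj_class_def using conj_subset by auto

lemma finite_Dset: "finite (carrier G) \<Longrightarrow> finite (Dset G)"
proof -
  assume f: "finite (carrier G)"
  have "Dset G \<subseteq> Pow (Pow (carrier G))"
    unfolding Dset_def using cls_subset_Pow subgroup.subset by blast
  then show ?thesis using f by (meson finite_Pow_iff finite_subset)
qed

lemma one_cls_notin_Dset: "{{\<one>}} \<notin> Dset G"
proof
  assume "{{\<one>}} \<in> Dset G"
  then obtain Y where Y: "subgroup Y G" "Y \<noteq> {\<one>}" "cls Y = {{\<one>}}" unfolding Dset_def by blast
  then have "Y \<in> {{\<one>}}" using self_in_cls subgroup.subset by metis
  then show False using Y by simp
qed

lemma carrier_cls_notin_Dset: "{carrier G} \<notin> Dset G"
proof
  assume "{carrier G} \<in> Dset G"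
  then obtain Y where Y: "subgroup Y G" "normalizer G Y \<noteq> Y" "cls Y = {carrier G}" unfolding Dset_def by blast
  then have "Y \<in> {carrier G}" using self_in_cls subgroup.subset by metis
  then show False using Y normalizer_carrier by simp
qed

lemma card_Fam:
  assumes "finite (carrier G)" "carrier G \<noteq> {\<one>}"
  shows "card (Fam G) = D_count G + 2"
proof -
  have "{{\<one>}} \<noteq> {carrier G}" using assms by auto
  then show ?thesis unfolding Fam_def D_count_Dset
    using finite_Dset[OF assms(1)] one_cls_notin_Dset carrier_cls_notin_Dset by simp
qed

lemma finite_Fam: "finite (carrier G) \<Longrightarrow> finite (Fam G)"
  unfolding Fam_def using finite_Dset by simp

lemma Fam_rep:
  assumes "c \<in> Fam G" "carrier G \<noteq> {\<one>}"
  shows "\<exists>A. subgroup A G \<and> c = cls A \<and> (c \<noteq> {{\<one>}} \<longrightarrow> A \<noteq> {\<one>}) \<and> (c \<noteq> {carrier G} \<longrightarrow> normalizer G A \<noteq> A)"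
proof -
  consider "c \<in> Dset G" | "c = {{\<one>}}" | "c = {carrier G}" using assms unfolding Fam_def by blast
  then show ?thesis
  proof cases
    case 1
    then show ?thesis unfolding Dset_def by blast
  next
    case 2
    then show ?thesis using cls_one normalizer_one assms(2) subgroup_self triv_subgroup by metis
  next
    case 3
    then show ?thesis using cls_carrier subgroup_self assms(2) by metis
  qed
qed

lemma cls_in_Fam:
  assumes "subgroup A G" "A = {\<one>} \<or> A = carrier G \<or> normalizer G A \<noteq> A"
  shows "cls A \<in> Fam G"
  using assms cls_one cls_carrier unfolding Fam_def Dset_def by auto

lemma Fam_nonempty:
  assumes "c \<in> Fam G" "carrier G \<noteq> {\<one>}"
  shows "c \<noteq> {}" "Z \<in> c \<Longrightarrow> Z \<noteq> {}"
proof -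
  obtain A where A: "subgroup A G" "c = cls A" using Fam_rep[OF assms] by blast
  show "c \<noteq> {}" using A self_in_cls subgroup.subset by blast
  show "Z \<in> c \<Longrightarrow> Z \<noteq> {}" using A cls_memD(1) subgroup.one_closed by blast
qed

end

lemma Phi_inj:
  assumes "c1 \<noteq> {}" "c2 \<noteq> {}" "d1 \<noteq> {}" "d2 \<noteq> {}"
    "\<And>Z. Z \<in> c1 \<union> d1 \<Longrightarrow> Z \<noteq> {}" "\<And>Z. Z \<in> c2 \<union> d2 \<Longrightarrow> Z \<noteq> {}"
    "Phi c1 c2 = Phi d1 d2"
  shows "c1 = d1 \<and> c2 = d2"
proof -
  have f: "(\<lambda>S. fst ` S) ` Phi a b = a" if nb: "b \<noteq> {}" and ne: "\<And>Z. Z \<in> b \<Longrightarrow> Z \<noteq> {}" for a :: "'a set set" and b :: "'b set set"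
  proof -
    obtain y where y: "y \<in> b" using nb by blast
    show ?thesis unfolding Phi_def using ne y by (auto simp: image_iff) (metis fst_image_times)
  qed
  have s: "(\<lambda>S. snd ` S) ` Phi a b = b" if na: "a \<noteq> {}" and ne: "\<And>Z. Z \<in> a \<Longrightarrow> Z \<noteq> {}" for a :: "'a set set" and b :: "'b set set"
  proof -
    obtain y where y: "y \<in> a" using na by blast
    show ?thesis unfolding Phi_def using ne y by (auto simp: image_iff) (metis snd_image_times)
  qed
  show ?thesis using f[of c2 c1] f[of d2 d1] s[of c1 c2] s[of d1 d2] assms by auto
qed


lemma Phi_cls:
  assumes "group H" "group K" "A \<subseteq> carrier H" "B \<subseteq> carrier K"
  shows "Phi (subgroup_conj_class H A) (subgroup_conj_class K B) = subgroup_conj_class (H \<times>\<times> K) (A \<times> B)"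
  unfolding Phi_def using cls_prod[OF assms] by simp

lemma count_main:
  fixes H :: "('a, 'b) monoid_scheme" and K :: "('c, 'd) monoid_scheme"
  assumes H: "group H" and K: "group K" and fH: "finite (carrier H)" and fK: "finite (carrier K)"
    and nH: "carrier H \<noteq> {\<one>\<^bsub>H\<^esub>}" and nK: "carrier K \<noteq> {\<one>\<^bsub>K\<^esub>}"
  defines "S \<equiv> Fam H \<times> Fam K - {({{\<one>\<^bsub>H\<^esub>}}, {{\<one>\<^bsub>K\<^esub>}}), ({carrier H}, {carrier K})}"
  shows "inj_on (\<lambda>(c1, c2). Phi c1 c2) S"
    and "card S = (D_count H + 2) * (D_count K + 2) - 2"
    and "(\<lambda>(c1, c2). Phi c1 c2) ` S \<subseteq> Dset (H \<times>\<times> K)"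
proof -
  interpret H: group H by fact
  interpret K: group K by fact
  interpret G: group "H \<times>\<times> K" using DirProd_group H K by blast
  show "inj_on (\<lambda>(c1, c2). Phi c1 c2) S"
  proof (rule inj_onI, clarify)
    fix c1 c2 d1 d2 assume c: "(c1, c2) \<in> S" and d: "(d1, d2) \<in> S" and e: "Phi c1 c2 = Phi d1 d2"
    have m: "c1 \<in> Fam H" "c2 \<in> Fam K" "d1 \<in> Fam H" "d2 \<in> Fam K" using c d unfolding S_def by auto
    show "c1 = d1 \<and> c2 = d2"
      using Phi_inj[OF H.Fam_nonempty(1)[OF m(1) nH] K.Fam_nonempty(1)[OF m(2) nK]
          H.Fam_nonempty(1)[OF m(3) nH] K.Fam_nonempty(1)[OF m(4) nK] _ _ e]
        H.Fam_nonempty(2)[OF m(1) nH] K.Fam_nonempty(2)[OF m(2) nK]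
        H.Fam_nonempty(2)[OF m(3) nH] K.Fam_nonempty(2)[OF m(4) nK]
      by blast
  qed
  have in1: "({{\<one>\<^bsub>H\<^esub>}}, {{\<one>\<^bsub>K\<^esub>}}) \<in> Fam H \<times> Fam K" unfolding Fam_def by simp
  have in2: "({carrier H}, {carrier K}) \<in> Fam H \<times> Fam K" unfolding Fam_def by simp
  have ne: "({{\<one>\<^bsub>H\<^esub>}}, {{\<one>\<^bsub>K\<^esub>}}) \<noteq> ({carrier H}, {carrier K})" using nH by auto
  have "card (Fam H \<times> Fam K) = (D_count H + 2) * (D_count K + 2)"
    using H.card_Fam[OF fH nH] K.card_Fam[OF fK nK] by (simp add: card_cartesian_product)
  moreover have "finite (Fam H \<times> Fam K)" using H.finite_Fam[OF fH] K.finite_Fam[OF fK] by simp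
  ultimately show "card S = (D_count H + 2) * (D_count K + 2) - 2"
    unfolding S_def using in1 in2 ne by (simp add: card_Diff_subset)
  show "(\<lambda>(c1, c2). Phi c1 c2) ` S \<subseteq> Dset (H \<times>\<times> K)"
  proof clarify
    fix c1 c2 assume c: "(c1, c2) \<in> S"
    have m: "c1 \<in> Fam H" "c2 \<in> Fam K" using c unfolding S_def by auto
    obtain A where A: "subgroup A H" "c1 = H.cls A" "c1 \<noteq> {{\<one>\<^bsub>H\<^esub>}} \<longrightarrow> A \<noteq> {\<one>\<^bsub>H\<^esub>}"
      "c1 \<noteq> {carrier H} \<longrightarrow> normalizer H A \<noteq> A" using H.Fam_rep[OF m(1) nH] by blast
    obtain B where B: "subgroup B K" "c2 = K.cls B" "c2 \<noteq> {{\<one>\<^bsub>K\<^esub>}} \<longrightarrow> B \<noteq> {\<one>\<^bsub>K\<^esub>}"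
      "c2 \<noteq> {carrier K} \<longrightarrow> normalizer K B \<noteq> B" using K.Fam_rep[OF m(2) nK] by blast
    have As: "A \<subseteq> carrier H" using subgroup.subset[OF A(1)] .
    have Bs: "B \<subseteq> carrier K" using subgroup.subset[OF B(1)] .
    have Ane: "A \<noteq> {}" using subgroup.one_closed[OF A(1)] by blast
    have Bne: "B \<noteq> {}" using subgroup.one_closed[OF B(1)] by blast
    have eq: "Phi c1 c2 = subgroup_conj_class (H \<times>\<times> K) (A \<times> B)"
      using Phi_cls[OF H K As Bs] A B by simp
    have sg: "subgroup (A \<times> B) (H \<times>\<times> K)" using DirProd_subgroups[OF H A(1) K B(1)] .
    have nt: "A \<times> B \<noteq> {\<one>\<^bsub>H \<times>\<times> K\<^esub>}"
    proof
      assume "A \<times> B = {\<one>\<^bsub>H \<times>\<times> K\<^esub>}"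
      then have "A = {\<one>\<^bsub>H\<^esub>}" "B = {\<one>\<^bsub>K\<^esub>}" by (auto simp: times_eq_iff)
      then show False using A B c unfolding S_def by auto
    qed
    have nn: "normalizer (H \<times>\<times> K) (A \<times> B) \<noteq> A \<times> B"
    proof
      assume "normalizer (H \<times>\<times> K) (A \<times> B) = A \<times> B"
      then have "normalizer H A \<times> normalizer K B = A \<times> B" using normalizer_prod[OF H K As Bs Ane Bne] by simp
      then have "normalizer H A = A" "normalizer K B = B" using Ane Bne by (auto simp: times_eq_iff)
      then show False using A B c unfolding S_def by auto
    qed
    show "Phi c1 c2 \<in> Dset (H \<times>\<times> K)" unfolding Dset_def eq using sg nt nn by blast
  qed
qed


context group begin

lemma mult_inv_cancel_l [simp]: "x \<in> carrier G \<Longrightarrow> a \<in> carrier G \<Longrightarrow> x \<otimes> (inv x \<otimes> a) = a"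
  by (simp add: m_assoc[symmetric])

lemma mult_inv_cancel_l2 [simp]: "x \<in> carrier G \<Longrightarrow> a \<in> carrier G \<Longrightarrow> inv x \<otimes> (x \<otimes> a) = a"
  by (simp add: m_assoc[symmetric])

abbreviation gam where "gam i \<equiv> (lower_central_step G ^^ i) (carrier G)"

lemma lcs_gens_subset:
  "W \<subseteq> carrier G \<Longrightarrow> {h \<otimes> g \<otimes> inv h \<otimes> inv g | h g. h \<in> W \<and> g \<in> carrier G} \<subseteq> carrier G"
  by auto

lemma gam_subgroup: "subgroup (gam i) G"
proof (induction i)
  case 0
  then show ?case by (simp add: subgroup_self)
next
  case (Suc i)
  have "gam i \<subseteq> carrier G" using Suc subgroup.subset by blast
  then show ?case unfolding funpow.simps comp_def lower_central_step_def
    using generate_is_subgroup lcs_gens_subset by blast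
qed

lemma gam_comm_in:
  assumes "h \<in> gam i" "g \<in> carrier G"
  shows "h \<otimes> g \<otimes> inv h \<otimes> inv g \<in> gam (Suc i)"
proof -
  have e: "gam (Suc i) = generate G {h \<otimes> g \<otimes> inv h \<otimes> inv g | h g. h \<in> gam i \<and> g \<in> carrier G}"
    by (simp add: lower_central_step_def)
  show ?thesis unfolding e by (rule generate.incl) (use assms in blast)
qed

lemma nilpotent_NC:
  assumes nil: "nilpotent_group G" and A: "subgroup A G" and ne: "A \<noteq> carrier G"
  shows "normalizer G A \<noteq> A"
proof -
  obtain n where n: "gam n = {\<one>}" using nil unfolding nilpotent_group_def by blast
  have As: "A \<subseteq> carrier G" using subgroup.subset[OF A] .
  have Pn: "gam n \<subseteq> A" using n subgroup.one_closed[OF A] by simp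
  define i where "i = (LEAST i. gam i \<subseteq> A)"
  have Pi: "gam i \<subseteq> A" unfolding i_def using Pn by (rule LeastI)
  have "i \<noteq> 0" using Pi ne As by auto
  then obtain j where ij: "i = Suc j" using not0_implies_Suc by blast
  have "\<not> gam j \<subseteq> A" using ij i_def not_less_Least[of j "\<lambda>i. gam i \<subseteq> A"] by auto
  then obtain x where x: "x \<in> gam j" "x \<notin> A" by blast
  have xc: "x \<in> carrier G" using x subgroup.subset[OF gam_subgroup] by blast
  have ix: "inv x \<in> gam j" using x subgroup.m_inv_closed[OF gam_subgroup] by blast
  have c1: "x \<otimes> a \<otimes> inv x \<in> A" if a: "a \<in> A" for a
  proof -
    have ac: "a \<in> carrier G" using a As by blast
    have "x \<otimes> a \<otimes> inv x \<otimes> inv a \<in> A" using gam_comm_in[OF x(1) ac] Pi ij by blast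
    then have "x \<otimes> a \<otimes> inv x \<otimes> inv a \<otimes> a \<in> A" using a subgroup.m_closed[OF A] by blast
    then show ?thesis using ac xc by simp
  qed
  have c2: "inv x \<otimes> a \<otimes> x \<in> A" if a: "a \<in> A" for a
  proof -
    have ac: "a \<in> carrier G" using a As by blast
    have "inv x \<otimes> a \<otimes> inv (inv x) \<otimes> inv a \<in> A" using gam_comm_in[OF ix ac] Pi ij by blast
    then have "inv x \<otimes> a \<otimes> x \<otimes> inv a \<otimes> a \<in> A" using a subgroup.m_closed[OF A] xc by simp
    then show ?thesis using ac xc by simp
  qed
  have "(\<lambda>a. x \<otimes> a \<otimes> inv x) ` A = A"
  proof
    show "(\<lambda>a. x \<otimes> a \<otimes> inv x) ` A \<subseteq> A" using c1 by blast
    show "A \<subseteq> (\<lambda>a. x \<otimes> a \<otimes> inv x) ` A"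
    proof
      fix a assume a: "a \<in> A"
      have ac: "a \<in> carrier G" using a As by blast
      have "a = x \<otimes> (inv x \<otimes> a \<otimes> x) \<otimes> inv x" using ac xc by (simp add: m_assoc)
      then show "a \<in> (\<lambda>a. x \<otimes> a \<otimes> inv x) ` A" using c2[OF a] by blast
    qed
  qed
  then have "x \<in> normalizer G A" using normalizer_iff2[OF As] xc by blast
  then show ?thesis using x(2) by blast
qed

end


context group begin

lemma sylow_exists:
  assumes fin: "finite (carrier G)" and q: "Factorial_Ring.prime q"
  shows "\<exists>Q a m. subgroup Q G \<and> card Q = q ^ a \<and> order G = q ^ a * m \<and> \<not> q dvd m"
proof -
  have o: "order G \<noteq> 0" using fin order_gt_0_iff_finite by auto
  have nu: "\<not> is_unit q" using q not_prime_unit by blast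
  obtain m where m: "order G = q ^ multiplicity q (order G) * m" "\<not> q dvd m"
    using multiplicity_decompose'[OF o nu] by blast
  obtain Q where "subgroup Q G" "card Q = q ^ multiplicity q (order G)"
    using sylow_thm[OF q is_group m(1) fin] by blast
  then show ?thesis using m by blast
qed

lemma pow_card_subgroup:
  assumes "subgroup Q G" "y \<in> Q" "finite Q"
  shows "y [^] card Q = \<one>"
proof -
  interpret Q: group "G\<lparr>carrier := Q\<rparr>" using subgroup_imp_group[OF assms(1)] .
  have "y [^]\<^bsub>G\<lparr>carrier := Q\<rparr>\<^esub> order (G\<lparr>carrier := Q\<rparr>) = \<one>\<^bsub>G\<lparr>carrier := Q\<rparr>\<^esub>"
    using Q.pow_order_eq_1 assms(2) by simp
  then show ?thesis by (simp add: order_def flip: nat_pow_consistent)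
qed

lemma sylow_normal_of_NC:
  assumes fin: "finite (carrier G)"
    and NC: "\<And>A. subgroup A G \<Longrightarrow> A \<noteq> carrier G \<Longrightarrow> normalizer G A \<noteq> A"
    and Psub: "subgroup P G" and Pc: "card P = p ^ a" and oG: "order G = p ^ a * m"
    and pm: "\<not> p dvd m" and p: "Factorial_Ring.prime p"
  shows "normalizer G P = carrier G"
proof -
  define M where "M = normalizer G P"
  have Ps: "P \<subseteq> carrier G" using subgroup.subset[OF Psub] .
  have Msub: "subgroup M G" unfolding M_def using normalizer_imp_subgroup[OF Ps] .
  have Ms: "M \<subseteq> carrier G" using subgroup.subset[OF Msub] .
  have PM: "P \<subseteq> M"
    unfolding M_def using normalizer_iff[OF Ps] conj_subgroup_self[OF Psub] Ps by blast
  have finP: "finite P" using fin Ps finite_subset by blast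
  have NM: "normalizer G M \<subseteq> M"
  proof
    fix g assume g: "g \<in> normalizer G M"
    have gc: "g \<in> carrier G" and gM: "(\<lambda>x. g \<otimes> x \<otimes> inv g) ` M = M"
      using g normalizer_iff2[OF Ms] by auto
    define Q where "Q = (\<lambda>x. g \<otimes> x \<otimes> inv g) ` P"
    have QM: "Q \<subseteq> M" unfolding Q_def using PM gM by blast
    have Qsub: "subgroup Q G"
      unfolding Q_def using subgroup_conjugation_is_surj2[OF gc Psub] conj_image[OF Ps gc] by simp
    have Qc: "card Q = p ^ a" unfolding Q_def using conj_card[OF Ps gc] conj_image[OF Ps gc] Pc by simp
    have QP: "Q \<subseteq> P"
    proof
      fix y assume yQ: "y \<in> Q"
      have yM: "y \<in> M" using yQ QM by blast
      have yc: "y \<in> carrier G" using yM Ms by blast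
      have finQ: "finite Q" using fin subgroup.subset[OF Qsub] finite_subset by blast
      have ypow: "y [^] (p ^ a) = \<one>" using pow_card_subgroup[OF Qsub yQ finQ] Qc by simp
      define M' where "M' = G\<lparr>carrier := M\<rparr>"
      have nP: "P \<lhd> M'" unfolding M'_def M_def using subgroup_in_normalizer[OF Psub] .
      interpret nPM: normal P M' using nP .
      interpret Mq: group "M' Mod P" using nPM.factorgroup_is_group .
      have yM': "y \<in> carrier M'" unfolding M'_def using yM by simp
      define c where "c = P #>\<^bsub>M'\<^esub> y"
      have cc: "c \<in> carrier (M' Mod P)" unfolding c_def carrier_FactGroup using yM' by blast
      have "c [^]\<^bsub>M' Mod P\<^esub> (p ^ a) = P #>\<^bsub>M'\<^esub> (y [^]\<^bsub>M'\<^esub> (p ^ a))"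
        unfolding c_def using nPM.FactGroup_pow[OF yM'] by simp
      also have "y [^]\<^bsub>M'\<^esub> (p ^ a) = \<one>\<^bsub>M'\<^esub>"
        unfolding M'_def using ypow by (simp flip: nat_pow_consistent)
      also have "P #>\<^bsub>M'\<^esub> \<one>\<^bsub>M'\<^esub> = P"
        using nPM.coset_mult_one nPM.subset by simp
      finally have cpow: "c [^]\<^bsub>M' Mod P\<^esub> (p ^ a) = \<one>\<^bsub>M' Mod P\<^esub>" by simp
      have d1: "Mq.ord c dvd p ^ a" using Mq.pow_eq_id[OF cc] cpow by blast
      have d2: "Mq.ord c dvd order (M' Mod P)" using Mq.ord_dvd_group_order[OF cc] .
      have lag1: "order (M' Mod P) * card P = card M"
        using nPM.lagrange[OF nPM.subgroup_axioms] unfolding M'_def FactGroup_def order_def by simp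
      have lag2: "card M dvd order G" using lagrange[OF Msub] by (metis dvd_triv_right)
      have "order (M' Mod P) * p ^ a dvd p ^ a * m" using lag1 lag2 Pc oG by simp
      then have "order (M' Mod P) dvd m" using p by (simp add: mult.commute prime_gt_0_nat)
      then have g1: "Mq.ord c dvd gcd (p ^ a) m" using d1 d2 by (meson dvd_trans gcd_greatest)
      have "coprime (p ^ a) m" using p pm by (simp add: prime_imp_coprime coprime_power_left_iff)
      then have "gcd (p ^ a) m = 1" by (simp add: coprime_iff_gcd_eq_1)
      then have "Mq.ord c = 1" using g1 by simp
      then have "c = P" using Mq.ord_eq_1[OF cc] by simp
      then have "P #> y = P" unfolding c_def M'_def r_coset_def by simp
      then show "y \<in> P" using rcos_self[OF yc Psub] by simp
    qed
    have "Q = P" using card_subset_eq[OF finP QP] Qc Pc by simp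
    then show "g \<in> M" unfolding M_def using normalizer_iff2[OF Ps] gc Q_def by simp
  qed
  have "M \<subseteq> normalizer G M"
    using normalizer_iff[OF Ms] conj_subgroup_self[OF Msub] Ms by blast
  then have "normalizer G M = M" using NM by blast
  then have "M = carrier G" using NC Msub by blast
  then show ?thesis unfolding M_def .
qed

end


lemma (in group_action) fixed_points_dvd:
  assumes XE: "Xs \<subseteq> E" and finX: "finite Xs"
    and cl: "\<And>g C. g \<in> carrier G \<Longrightarrow> C \<in> Xs \<Longrightarrow> \<phi> g C \<in> Xs"
    and orb: "\<And>C. C \<in> Xs \<Longrightarrow> card (orbit G \<phi> C) > 1 \<Longrightarrow> p dvd card (orbit G \<phi> C)"
    and pX: "p dvd card Xs"
  shows "p dvd card {C \<in> Xs. \<forall>g \<in> carrier G. \<phi> g C = C}"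
proof -
  define Fx where "Fx = {C \<in> Xs. \<forall>g \<in> carrier G. \<phi> g C = C}"
  define Os where "Os = orbit G \<phi> ` (Xs - Fx)"
  have orbX: "orbit G \<phi> C \<subseteq> Xs" if "C \<in> Xs" for C
    unfolding orbit_def using cl that by blast
  have fixorb: "orbit G \<phi> D = {D}" if "D \<in> Fx" for D
  proof -
    have "D \<in> E" using that XE unfolding Fx_def by blast
    then show ?thesis using that orbit_refl unfolding Fx_def orbit_def by auto
  qed
  have orbnf: "orbit G \<phi> C \<subseteq> Xs - Fx" if C: "C \<in> Xs - Fx" for C
  proof
    fix D assume D: "D \<in> orbit G \<phi> C"
    have CE: "C \<in> E" and DX: "D \<in> Xs" using C D orbX XE by blast+
    have DE: "D \<in> E" using DX XE by blast
    show "D \<in> Xs - Fx"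
    proof (rule ccontr)
      assume "D \<notin> Xs - Fx"
      then have "D \<in> Fx" using DX by blast
      then have "C \<in> {D}" using orbit_sym[OF CE DE D] fixorb by blast
      then show False using C \<open>D \<in> Fx\<close> by blast
    qed
  qed
  have U: "\<Union> Os = Xs - Fx"
  proof
    show "\<Union> Os \<subseteq> Xs - Fx" unfolding Os_def using orbnf by blast
    show "Xs - Fx \<subseteq> \<Union> Os" unfolding Os_def using orbit_refl XE by blast
  qed
  have finO: "finite Os" unfolding Os_def using finX by simp
  have disj: "pairwise disjnt Os"
  proof (rule pairwiseI)
    fix o1 o2 assume o1: "o1 \<in> Os" and o2: "o2 \<in> Os" and ne: "o1 \<noteq> o2"
    have "o1 \<in> orbits G E \<phi>" "o2 \<in> orbits G E \<phi>" using o1 o2 XE unfolding Os_def orbits_def by blast+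
    then show "disjnt o1 o2" using disjoint_union ne unfolding disjnt_def by blast
  qed
  have finOs: "finite A" if A: "A \<in> Os" for A
  proof -
    obtain C where C: "C \<in> Xs - Fx" and AC: "A = orbit G \<phi> C" using A unfolding Os_def by blast
    show ?thesis using orbX[of C] C AC finX finite_subset by blast
  qed
  have cards: "card (Xs - Fx) = sum card Os"
    using card_Union_disjoint[OF disj finOs] U by simp
  have "p dvd card ob" if ob: "ob \<in> Os" for ob
  proof -
    obtain C where C: "C \<in> Xs - Fx" and oC: "ob = orbit G \<phi> C" using ob unfolding Os_def by blast
    obtain g where g: "g \<in> carrier G" "\<phi> g C \<noteq> C" using C unfolding Fx_def by blast
    have "C \<in> ob" "\<phi> g C \<in> ob" using oC orbit_refl XE C g unfolding orbit_def by blast+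
    moreover have "finite ob" using oC orbX C finX finite_subset by blast
    ultimately have "card {C, \<phi> g C} \<le> card ob" by (intro card_mono) auto
    moreover have "card {C, \<phi> g C} = 2" using g(2) by simp
    ultimately have "card ob > 1" by simp
    then show ?thesis using orb C oC by blast
  qed
  then have "p dvd card (Xs - Fx)" using cards by (simp add: dvd_sum)
  moreover have "card Xs = card Fx + card (Xs - Fx)"
    using finX card_Diff_subset[of Fx Xs] card_mono[of Xs Fx] unfolding Fx_def
    by (simp add: finite_subset)
  ultimately have "p dvd card Fx + card (Xs - Fx)" "p dvd card (Xs - Fx)" using pX by simp_all
  then have "p dvd card Fx" using dvd_add_left_iff by blast
  then show ?thesis unfolding Fx_def .
qed


context group begin

lemma norm_conj_mem:
  assumes "normalizer G Q = carrier G" "Q \<subseteq> carrier G" "g \<in> carrier G" "x \<in> Q"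
  shows "g \<otimes> x \<otimes> inv g \<in> Q"
  using assms normalizer_iff2[OF assms(2), of g] by blast

lemma card_subgroup_dvd:
  assumes "subgroup A G" "subgroup B G" "A \<subseteq> B"
  shows "card A dvd card B"
proof -
  interpret B: group "G\<lparr>carrier := B\<rparr>" using subgroup_imp_group[OF assms(2)] .
  have "subgroup A (G\<lparr>carrier := B\<rparr>)" using subgroup_incl[OF assms] .
  then have "card (rcosets\<^bsub>G\<lparr>carrier := B\<rparr>\<^esub> A) * card A = order (G\<lparr>carrier := B\<rparr>)" using B.lagrange by blast
  then have "card (rcosets\<^bsub>G\<lparr>carrier := B\<rparr>\<^esub> A) * card A = card B" by (simp add: order_def)
  then show ?thesis by (metis dvd_triv_right)
qed

lemma coprime_inter:
  assumes "subgroup P G" "subgroup Q G" "finite (carrier G)" "coprime (card P) (card Q)"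
  shows "P \<inter> Q = {\<one>}"
proof -
  have I: "subgroup (P \<inter> Q) G" using subgroups_Inter_pair assms by blast
  have "card (P \<inter> Q) dvd card P" "card (P \<inter> Q) dvd card Q"
    using card_subgroup_dvd[OF I assms(1)] card_subgroup_dvd[OF I assms(2)] by auto
  then have "card (P \<inter> Q) dvd gcd (card P) (card Q)" by simp
  moreover have "gcd (card P) (card Q) = 1" using assms(4) by (simp add: coprime_iff_gcd_eq_1)
  ultimately have "card (P \<inter> Q) = 1" by simp
  then obtain x where "P \<inter> Q = {x}" using card_1_singletonE by blast
  moreover have "\<one> \<in> P \<inter> Q" using subgroup.one_closed[OF I] .
  ultimately show ?thesis by auto
qed

lemma normal_commute:
  assumes "normalizer G P = carrier G" "normalizer G Q = carrier G" "subgroup P G" "subgroup Q G"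
    "P \<inter> Q = {\<one>}" "h \<in> Q" "y \<in> P"
  shows "h \<otimes> y \<otimes> inv h = y"
proof -
  have Ps: "P \<subseteq> carrier G" and Qs: "Q \<subseteq> carrier G" using assms(3,4) subgroup.subset by blast+
  have hc: "h \<in> carrier G" and yc: "y \<in> carrier G" using assms Ps Qs by blast+
  define c where "c = h \<otimes> y \<otimes> inv h \<otimes> inv y"
  have "h \<otimes> y \<otimes> inv h \<in> P" using norm_conj_mem[OF assms(1) Ps hc assms(7)] .
  then have cP: "c \<in> P" unfolding c_def using subgroup.m_closed[OF assms(3) _ subgroup.m_inv_closed[OF assms(3) assms(7)]] by blast
  have "y \<otimes> inv h \<otimes> inv y \<in> Q" using norm_conj_mem[OF assms(2) Qs yc subgroup.m_inv_closed[OF assms(4) assms(6)]] .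
  then have "h \<otimes> (y \<otimes> inv h \<otimes> inv y) \<in> Q" using subgroup.m_closed[OF assms(4) assms(6)] by blast
  then have cQ: "c \<in> Q" unfolding c_def using hc yc by (simp add: m_assoc)
  have "c = \<one>" using cP cQ assms(5) by blast
  then have "h \<otimes> y \<otimes> inv h \<otimes> inv y \<otimes> y = y" unfolding c_def using yc by simp
  then show ?thesis using hc yc by simp
qed

lemma conj_rcoset:
  assumes "Z \<lhd> G" "g \<in> carrier G" "y \<in> carrier G"
  shows "(g <# (Z #> y)) #> inv g = Z #> (g \<otimes> y \<otimes> inv g)"
proof -
  interpret N: normal Z G by fact
  have Zs: "Z \<subseteq> carrier G" using N.subset .
  have Zy: "Z #> y = (\<lambda>z. z \<otimes> y) ` Z" unfolding r_coset_def by auto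
  have Zy2: "Z #> (g \<otimes> y \<otimes> inv g) = (\<lambda>z. z \<otimes> (g \<otimes> y \<otimes> inv g)) ` Z" unfolding r_coset_def by auto
  have "Z #> y \<subseteq> carrier G" using Zy Zs assms by auto
  then have "(g <# (Z #> y)) #> inv g = (\<lambda>z. g \<otimes> z \<otimes> inv g) ` ((\<lambda>z. z \<otimes> y) ` Z)"
    using conj_image assms Zy by simp
  also have "\<dots> = (\<lambda>z. z \<otimes> (g \<otimes> y \<otimes> inv g)) ` Z"
  proof
    show "(\<lambda>z. g \<otimes> z \<otimes> inv g) ` (\<lambda>z. z \<otimes> y) ` Z \<subseteq> (\<lambda>z. z \<otimes> (g \<otimes> y \<otimes> inv g)) ` Z"
    proof clarify
      fix z assume z: "z \<in> Z"
      have zc: "z \<in> carrier G" using z Zs by blast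
      have "g \<otimes> z \<otimes> inv g \<in> Z" using N.inv_op_closed2 z assms(2) by simp
      moreover have "g \<otimes> (z \<otimes> y) \<otimes> inv g = (g \<otimes> z \<otimes> inv g) \<otimes> (g \<otimes> y \<otimes> inv g)"
        using zc assms by (simp add: m_assoc)
      ultimately show "g \<otimes> (z \<otimes> y) \<otimes> inv g \<in> (\<lambda>z. z \<otimes> (g \<otimes> y \<otimes> inv g)) ` Z" by blast
    qed
    show "(\<lambda>z. z \<otimes> (g \<otimes> y \<otimes> inv g)) ` Z \<subseteq> (\<lambda>z. g \<otimes> z \<otimes> inv g) ` (\<lambda>z. z \<otimes> y) ` Z"
    proof clarify
      fix z assume z: "z \<in> Z"
      have zc: "z \<in> carrier G" using z Zs by blast
      have "inv g \<otimes> z \<otimes> g \<in> Z" using N.inv_op_closed1 z assms(2) by simp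
      moreover have "z \<otimes> (g \<otimes> y \<otimes> inv g) = g \<otimes> ((inv g \<otimes> z \<otimes> g) \<otimes> y) \<otimes> inv g"
        using zc assms by (simp add: m_assoc)
      ultimately show "z \<otimes> (g \<otimes> y \<otimes> inv g) \<in> (\<lambda>z. g \<otimes> z \<otimes> inv g) ` (\<lambda>z. z \<otimes> y) ` Z" by blast
    qed
  qed
  finally show ?thesis using Zy2 by simp
qed

lemma not_dvd_index:
  assumes "subgroup S G" "subgroup Q G" "Q \<subseteq> S" "card Q = q ^ b" "order G = q ^ b * mq" "\<not> q dvd mq"
    "s * card S = order G" "q \<noteq> 0"
  shows "\<not> q dvd s"
proof
  assume "q dvd s"
  moreover have "q ^ b dvd card S" using card_subgroup_dvd[OF assms(2,1,3)] assms(4) by simp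
  ultimately have "q * q ^ b dvd s * card S" by (rule mult_dvd_mono)
  then have "q ^ b * q dvd q ^ b * mq" using assms(5,7) by (simp add: mult.commute)
  then have "q dvd mq" using assms(8) by simp
  then show False using assms(6) by blast
qed

end


context group begin

lemma central_exists:
  assumes fin: "finite (carrier G)"
    and syl: "\<And>q Q a m. Factorial_Ring.prime q \<Longrightarrow> subgroup Q G \<Longrightarrow> card Q = q ^ a \<Longrightarrow>
               order G = q ^ a * m \<Longrightarrow> \<not> q dvd m \<Longrightarrow> normalizer G Q = carrier G"
    and Zn: "Z \<lhd> G" and Zne: "Z \<noteq> carrier G"
  shows "\<exists>y\<in>carrier G. y \<notin> Z \<and> (\<forall>g\<in>carrier G. y \<otimes> g \<otimes> inv y \<otimes> inv g \<in> Z)"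
proof -
  interpret N: normal Z G by fact
  have Zsub: "subgroup Z G" by (rule N.subgroup_axioms)
  have Zs: "Z \<subseteq> carrier G" by (rule N.subset)
  have finZ: "finite Z" using fin Zs finite_subset by blast
  define d where "d = card (rcosets Z)"
  have lag: "d * card Z = order G" unfolding d_def using lagrange[OF Zsub] .
  have d1: "d \<noteq> 1"
  proof
    assume "d = 1"
    then have "card Z = card (carrier G)" using lag by (simp add: order_def)
    then have "Z = carrier G" using card_subset_eq[OF fin Zs] by simp
    then show False using Zne by blast
  qed
  obtain p where p: "Factorial_Ring.prime p" "p dvd d" using prime_factor_nat[OF d1] by blast
  obtain P a m where P: "subgroup P G" "card P = p ^ a" "order G = p ^ a * m" "\<not> p dvd m"
    using sylow_exists[OF fin p(1)] by blast
  have Ps: "P \<subseteq> carrier G" using subgroup.subset[OF P(1)] .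
  have nP: "normalizer G P = carrier G" using syl[OF p(1) P] .
  have Pconj: "g \<otimes> y \<otimes> inv g \<in> P" if "g \<in> carrier G" "y \<in> P" for g y
    using norm_conj_mem[OF nP Ps that] .
  define W where "W = Z <#> P"
  have Wsub: "subgroup W G"
  proof -
    have "second_isomorphism_grp Z G P"
      unfolding second_isomorphism_grp_def second_isomorphism_grp_axioms_def using Zn P(1) by blast
    then show ?thesis unfolding W_def using second_isomorphism_grp.normal_set_mult_subgroup by blast
  qed
  have ZW: "Z \<subseteq> W"
  proof
    fix z assume z: "z \<in> Z"
    then have "z = z \<otimes> \<one>" using Zs by auto
    then show "z \<in> W" unfolding W_def set_mult_def using z subgroup.one_closed[OF P(1)] by blast
  qed
  have PW: "P \<subseteq> W"
  proof
    fix y assume y: "y \<in> P"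
    then have "y = \<one> \<otimes> y" using Ps by auto
    then show "y \<in> W" unfolding W_def set_mult_def using y subgroup.one_closed[OF Zsub] by blast
  qed
  interpret W: group "G\<lparr>carrier := W\<rparr>" using subgroup_imp_group[OF Wsub] .
  have ZW': "subgroup Z (G\<lparr>carrier := W\<rparr>)" using subgroup_incl[OF Zsub Wsub ZW] .
  have PW': "subgroup P (G\<lparr>carrier := W\<rparr>)" using subgroup_incl[OF P(1) Wsub PW] .
  define Xs where "Xs = {Z #> w | w. w \<in> W}"
  have Xs_eq: "Xs = rcosets\<^bsub>G\<lparr>carrier := W\<rparr>\<^esub> Z"
    unfolding Xs_def RCOSETS_def r_coset_def by auto
  have lagW: "card Xs * card Z = card W"
    using W.lagrange[OF ZW'] unfolding Xs_eq by (simp add: order_def)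
  have PdW: "card P dvd card W" using card_subgroup_dvd[OF P(1) Wsub PW] .
  have pX: "p dvd card Xs"
  proof (rule ccontr)
    assume np: "\<not> p dvd card Xs"
    have "coprime (p ^ a) (card Xs)" using np p(1) by (simp add: prime_imp_coprime coprime_power_left_iff)
    moreover have "p ^ a dvd card Xs * card Z" using PdW lagW P(2) by simp
    ultimately have "p ^ a dvd card Z" using coprime_dvd_mult_right_iff by blast
    then have "p * p ^ a dvd d * card Z" using mult_dvd_mono[OF p(2)] by blast
    then have "p ^ a * p dvd p ^ a * m" using lag P(3) by (simp add: mult.commute)
    then have "p dvd m" using p(1) by (simp add: prime_gt_0_nat)
    then show False using P(4) by blast
  qed
  have Xrep: "\<exists>y\<in>P. C = Z #> y" if C: "C \<in> Xs" for C
  proof -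
    obtain w where w: "w \<in> W" "C = Z #> w" using C unfolding Xs_def by blast
    obtain z y where zy: "z \<in> Z" "y \<in> P" "w = z \<otimes> y" using w(1) unfolding W_def set_mult_def by blast
    have zc: "z \<in> carrier G" and yc: "y \<in> carrier G" using zy Zs Ps by blast+
    have "Z #> w = (Z #> z) #> y" using coset_mult_assoc[OF Zs zc yc] zy by simp
    also have "Z #> z = Z" using N.rcos_const[OF is_group zy(1)] .
    finally show ?thesis using w zy by blast
  qed
  have Xmem: "Z #> y \<in> Xs" if "y \<in> P" for y unfolding Xs_def using PW that by blast
  have finXs: "finite Xs"
  proof -
    have "Xs \<subseteq> Pow (carrier G)" unfolding Xs_def using Zs Wsub subgroup.subset r_coset_subset_G by blast
    then show ?thesis using fin by (meson finite_Pow_iff finite_subset)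
  qed
  define E where "E = {H. H \<subseteq> carrier G}"
  define \<phi> where "\<phi> = (\<lambda>g. \<lambda>H \<in> E. g <# H #> inv g)"
  interpret act: group_action G E \<phi>
    unfolding \<phi>_def E_def using action_by_conjugation_on_power_set .
  have XE: "Xs \<subseteq> E" unfolding E_def Xs_def using Zs Wsub subgroup.subset r_coset_subset_G by blast
  have phiZy: "\<phi> g (Z #> y) = Z #> (g \<otimes> y \<otimes> inv g)" if gc: "g \<in> carrier G" and yc: "y \<in> carrier G" for g y
  proof -
    have "Z #> y \<in> E" unfolding E_def using r_coset_subset_G[OF Zs yc] by blast
    then show ?thesis unfolding \<phi>_def using conj_rcoset[OF Zn gc yc] by simp
  qed
  have cl: "\<phi> g C \<in> Xs" if gc: "g \<in> carrier G" and C: "C \<in> Xs" for g C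
  proof -
    obtain y where y: "y \<in> P" "C = Z #> y" using Xrep[OF C] by blast
    have yc: "y \<in> carrier G" using y Ps by blast
    show ?thesis using phiZy[OF gc yc] y Xmem[OF Pconj[OF gc y(1)]] by simp
  qed
  have orb: "p dvd card (orbit G \<phi> C)" if C: "C \<in> Xs" and c1: "card (orbit G \<phi> C) > 1" for C
  proof -
    obtain y where y: "y \<in> P" "C = Z #> y" using Xrep[OF C] by blast
    have CE: "C \<in> E" using C XE by blast
    obtain q where q: "Factorial_Ring.prime q" "q dvd card (orbit G \<phi> C)"
      using prime_factor_nat[of "card (orbit G \<phi> C)"] c1 by auto
    show ?thesis
    proof (cases "q = p")
      case True
      then show ?thesis using q by simp
    next
      case False
      obtain Q b mq where Q: "subgroup Q G" "card Q = q ^ b" "order G = q ^ b * mq" "\<not> q dvd mq"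
        using sylow_exists[OF fin q(1)] by blast
      have Qs: "Q \<subseteq> carrier G" using subgroup.subset[OF Q(1)] .
      have nQ: "normalizer G Q = carrier G" using syl[OF q(1) Q] .
      have "coprime p q" using p(1) q(1) False by (simp add: primes_coprime)
      then have "coprime (card P) (card Q)" using P(2) Q(2) by simp
      then have PQ: "P \<inter> Q = {\<one>}" using coprime_inter[OF P(1) Q(1) fin] by simp
      have Sub: "subgroup (stabilizer G \<phi> C) G" using act.stabilizer_subgroup[OF CE] .
      have QS: "Q \<subseteq> stabilizer G \<phi> C"
      proof
        fix h assume h: "h \<in> Q"
        have hc: "h \<in> carrier G" using h Qs by blast
        have yc: "y \<in> carrier G" using y Ps by blast
        have "\<phi> h C = Z #> (h \<otimes> y \<otimes> inv h)" using phiZy[OF hc yc] y by simp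
        also have "h \<otimes> y \<otimes> inv h = y" using normal_commute[OF nP nQ P(1) Q(1) PQ h y(1)] .
        finally show "h \<in> stabilizer G \<phi> C" unfolding stabilizer_def using hc y by simp
      qed
      have os: "card (orbit G \<phi> C) * card (stabilizer G \<phi> C) = order G"
        using act.orbit_stabilizer_theorem[OF CE] .
      have "\<not> q dvd card (orbit G \<phi> C)"
        using not_dvd_index[OF Sub Q(1) QS Q(2) Q(3) Q(4) os] q(1) by (simp add: prime_gt_0_nat)
      then show ?thesis using q by blast
    qed
  qed
  define Fx where "Fx = {C \<in> Xs. \<forall>g \<in> carrier G. \<phi> g C = C}"
  have pF: "p dvd card Fx" unfolding Fx_def
    using act.fixed_points_dvd[OF XE finXs cl orb pX] by blast
  have ZF: "Z \<in> Fx"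
  proof -
    have Z1: "Z #> \<one> = Z" using coset_mult_one[OF Zs] .
    have "Z \<in> Xs" using Xmem[OF subgroup.one_closed[OF P(1)]] Z1 by simp
    moreover have "\<phi> g Z = Z" if "g \<in> carrier G" for g
      using phiZy[OF that one_closed] Z1 that by simp
    ultimately show ?thesis unfolding Fx_def by blast
  qed
  have finF: "finite Fx" unfolding Fx_def using finXs by simp
  obtain C where CF: "C \<in> Fx" and CZ: "C \<noteq> Z"
  proof (rule ccontr)
    assume "\<not> thesis"
    then have "Fx \<subseteq> {Z}" using that by blast
    then have "Fx = {Z}" using ZF by blast
    then have "p dvd 1" using pF by simp
    then show False using p(1) by simp
  qed
  obtain y where y: "y \<in> P" "C = Z #> y" using Xrep CF unfolding Fx_def by blast
  have yc: "y \<in> carrier G" using y Ps by blast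
  have yZ: "y \<notin> Z" using N.rcos_const[OF is_group] y CZ by blast
  have "y \<otimes> g \<otimes> inv y \<otimes> inv g \<in> Z" if g: "g \<in> carrier G" for g
  proof -
    have "Z #> (g \<otimes> y \<otimes> inv g) = Z #> y" using phiZy[OF g yc] CF y g unfolding Fx_def by simp
    then have "g \<otimes> y \<otimes> inv g \<in> Z #> y" using rcos_self[of "g \<otimes> y \<otimes> inv g" Z] Zsub g yc by simp
    then have "g \<otimes> y \<otimes> inv g \<otimes> inv y \<in> Z" using N.rcos_module_imp[OF is_group yc] by blast
    then have "inv (g \<otimes> y \<otimes> inv g \<otimes> inv y) \<in> Z" using N.m_inv_closed by blast
    moreover have "inv (g \<otimes> y \<otimes> inv g \<otimes> inv y) = y \<otimes> g \<otimes> inv y \<otimes> inv g"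
      using g yc by (simp add: inv_mult_group m_assoc)
    ultimately show ?thesis by simp
  qed
  then show ?thesis using yc yZ by blast
qed

end


primrec ucs :: "('a, 'b) monoid_scheme \<Rightarrow> nat \<Rightarrow> 'a set" where
  "ucs G 0 = {\<one>\<^bsub>G\<^esub>}"
| "ucs G (Suc i) = {x \<in> carrier G. \<forall>g\<in>carrier G. x \<otimes>\<^bsub>G\<^esub> g \<otimes>\<^bsub>G\<^esub> inv\<^bsub>G\<^esub> x \<otimes>\<^bsub>G\<^esub> inv\<^bsub>G\<^esub> g \<in> ucs G i}"

context group begin

lemma comm_mult_id:
  assumes "x \<in> carrier G" "y \<in> carrier G" "g \<in> carrier G"
  shows "(x \<otimes> y) \<otimes> g \<otimes> inv (x \<otimes> y) \<otimes> inv g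
       = x \<otimes> (y \<otimes> g \<otimes> inv y \<otimes> inv g) \<otimes> inv x \<otimes> (x \<otimes> g \<otimes> inv x \<otimes> inv g)"
  using assms by (simp add: m_assoc inv_mult_group)

lemma comm_inv_id:
  assumes "x \<in> carrier G" "g \<in> carrier G"
  shows "inv x \<otimes> g \<otimes> inv (inv x) \<otimes> inv g = inv x \<otimes> inv (x \<otimes> g \<otimes> inv x \<otimes> inv g) \<otimes> x"
  using assms by (simp add: m_assoc inv_mult_group)

lemma comm_conj_id:
  assumes "x \<in> carrier G" "h \<in> carrier G" "g \<in> carrier G"
  shows "(h \<otimes> x \<otimes> inv h) \<otimes> g \<otimes> inv (h \<otimes> x \<otimes> inv h) \<otimes> inv g
       = h \<otimes> (x \<otimes> (inv h \<otimes> g \<otimes> h) \<otimes> inv x \<otimes> inv (inv h \<otimes> g \<otimes> h)) \<otimes> inv h"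
  using assms by (simp add: m_assoc inv_mult_group)

lemma ucs_normal: "ucs G i \<lhd> G"
proof (induction i)
  case 0
  then show ?case using one_is_normal by simp
next
  case (Suc i)
  interpret N: normal "ucs G i" G using Suc .
  let ?Z = "ucs G i"
  let ?S = "ucs G (Suc i)"
  have Zc: "\<And>z. z \<in> ?Z \<Longrightarrow> z \<in> carrier G" using N.subset by blast
  have conjZ: "\<And>h z. h \<in> carrier G \<Longrightarrow> z \<in> ?Z \<Longrightarrow> h \<otimes> z \<otimes> inv h \<in> ?Z"
    using N.inv_op_closed2 by blast
  have sub: "subgroup ?S G"
  proof (rule subgroupI)
    show "?S \<subseteq> carrier G" by auto
    have "\<one> \<in> ?S" using N.one_closed by simp
    then show "?S \<noteq> {}" by blast
  next
    fix x assume x: "x \<in> ?S"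
    have xc: "x \<in> carrier G" using x by simp
    have "inv x \<otimes> g \<otimes> inv (inv x) \<otimes> inv g \<in> ?Z" if g: "g \<in> carrier G" for g
    proof -
      have "x \<otimes> g \<otimes> inv x \<otimes> inv g \<in> ?Z" using x g by simp
      then have "inv x \<otimes> inv (x \<otimes> g \<otimes> inv x \<otimes> inv g) \<otimes> inv (inv x) \<in> ?Z"
        using conjZ[of "inv x"] N.m_inv_closed xc by blast
      then show ?thesis using comm_inv_id[OF xc g] xc by simp
    qed
    then show "inv x \<in> ?S" using xc by simp
  next
    fix x y assume x: "x \<in> ?S" and y: "y \<in> ?S"
    have xc: "x \<in> carrier G" and yc: "y \<in> carrier G" using x y by simp_all
    have "(x \<otimes> y) \<otimes> g \<otimes> inv (x \<otimes> y) \<otimes> inv g \<in> ?Z" if g: "g \<in> carrier G" for g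
    proof -
      have a: "x \<otimes> g \<otimes> inv x \<otimes> inv g \<in> ?Z" using x g by simp
      have b: "y \<otimes> g \<otimes> inv y \<otimes> inv g \<in> ?Z" using y g by simp
      have "x \<otimes> (y \<otimes> g \<otimes> inv y \<otimes> inv g) \<otimes> inv x \<in> ?Z" using conjZ[OF xc b] .
      then have "x \<otimes> (y \<otimes> g \<otimes> inv y \<otimes> inv g) \<otimes> inv x \<otimes> (x \<otimes> g \<otimes> inv x \<otimes> inv g) \<in> ?Z"
        using a N.m_closed by blast
      then show ?thesis using comm_mult_id[OF xc yc g] by simp
    qed
    then show "x \<otimes> y \<in> ?S" using xc yc by simp
  qed
  have "h \<otimes> x \<otimes> inv h \<in> ?S" if h: "h \<in> carrier G" and x: "x \<in> ?S" for h x
  proof -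
    have xc: "x \<in> carrier G" using x by simp
    have "(h \<otimes> x \<otimes> inv h) \<otimes> g \<otimes> inv (h \<otimes> x \<otimes> inv h) \<otimes> inv g \<in> ?Z" if g: "g \<in> carrier G" for g
    proof -
      have g': "inv h \<otimes> g \<otimes> h \<in> carrier G" using g h by simp
      have "x \<otimes> (inv h \<otimes> g \<otimes> h) \<otimes> inv x \<otimes> inv (inv h \<otimes> g \<otimes> h) \<in> ?Z"
        using x g' by simp
      then show ?thesis using conjZ[OF h] comm_conj_id[OF xc h g] by simp
    qed
    then show ?thesis using h xc by simp
  qed
  then show ?case using normal_inv_iff sub by blast
qed

lemma ucs_mono: "ucs G i \<subseteq> ucs G (Suc i)"
proof
  fix x assume x: "x \<in> ucs G i"
  interpret N: normal "ucs G i" G using ucs_normal .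
  have xc: "x \<in> carrier G" using x N.subset by blast
  have "x \<otimes> g \<otimes> inv x \<otimes> inv g \<in> ucs G i" if g: "g \<in> carrier G" for g
  proof -
    have "g \<otimes> inv x \<otimes> inv g \<in> ucs G i" using N.inv_op_closed2[OF g N.m_inv_closed[OF x]] .
    then have "x \<otimes> (g \<otimes> inv x \<otimes> inv g) \<in> ucs G i" using x N.m_closed by blast
    then show ?thesis using xc g by (simp add: m_assoc)
  qed
  then show "x \<in> ucs G (Suc i)" using xc by simp
qed

lemma NC_nilpotent:
  assumes fin: "finite (carrier G)"
    and NC: "\<And>A. subgroup A G \<Longrightarrow> A \<noteq> carrier G \<Longrightarrow> normalizer G A \<noteq> A"
  shows "nilpotent_group G"
proof -
  have syl: "\<And>q Q a m. Factorial_Ring.prime q \<Longrightarrow> subgroup Q G \<Longrightarrow> card Q = q ^ a \<Longrightarrow>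
               order G = q ^ a * m \<Longrightarrow> \<not> q dvd m \<Longrightarrow> normalizer G Q = carrier G"
    by (rule sylow_normal_of_NC[OF fin NC])
  have ucs_sub: "ucs G i \<subseteq> carrier G" for i
    using subgroup.subset[OF normal_imp_subgroup[OF ucs_normal[of i]]] .
  have grow: "ucs G i = carrier G \<or> i < card (ucs G i)" for i
  proof (induction i)
    case 0
    then show ?case by simp
  next
    case (Suc i)
    show ?case
    proof (cases "ucs G i = carrier G")
      case True
      then show ?thesis using ucs_mono[of i] ucs_sub[of "Suc i"] by blast
    next
      case False
      then have lt: "i < card (ucs G i)" using Suc by blast
      have ex: "\<exists>y\<in>carrier G. y \<notin> ucs G i \<and> (\<forall>g\<in>carrier G. y \<otimes> g \<otimes> inv y \<otimes> inv g \<in> ucs G i)"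
        by (rule central_exists[OF fin syl ucs_normal False])
      then obtain y where y: "y \<in> carrier G" "y \<notin> ucs G i"
        "\<forall>g\<in>carrier G. y \<otimes> g \<otimes> inv y \<otimes> inv g \<in> ucs G i"
        by blast
      have "y \<in> ucs G (Suc i)" using y by simp
      then have "ucs G i \<subset> ucs G (Suc i)" using y(2) ucs_mono[of i] by blast
      moreover have "finite (ucs G (Suc i))" using fin ucs_sub finite_subset by blast
      ultimately have "card (ucs G i) < card (ucs G (Suc i))" by (rule psubset_card_mono[rotated])
      then show ?thesis using lt by simp
    qed
  qed
  define n where "n = order G"
  have ucsn: "ucs G n = carrier G"
  proof -
    have "card (ucs G n) \<le> n" unfolding n_def order_def using card_mono[OF fin ucs_sub] .
    then show ?thesis using grow[of n] by simp
  qed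
  have gamsub: "j \<le> n \<Longrightarrow> gam j \<subseteq> ucs G (n - j)" for j
  proof (induction j)
    case 0
    then show ?case using ucsn by simp
  next
    case (Suc j)
    then have IH: "gam j \<subseteq> ucs G (Suc (n - Suc j))" by (simp add: Suc_diff_Suc)
    have e: "gam (Suc j) = generate G {h \<otimes> g \<otimes> inv h \<otimes> inv g | h g. h \<in> gam j \<and> g \<in> carrier G}"
      by (simp add: lower_central_step_def)
    have "{h \<otimes> g \<otimes> inv h \<otimes> inv g | h g. h \<in> gam j \<and> g \<in> carrier G} \<subseteq> ucs G (n - Suc j)"
      using IH by auto
    then show ?case unfolding e
      using generate_subgroup_incl normal_imp_subgroup[OF ucs_normal] by blast
  qed
  have "gam n \<subseteq> {\<one>}" using gamsub[of n] by simp
  moreover have "\<one> \<in> gam n" using subgroup.one_closed[OF gam_subgroup] .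
  ultimately have "gam n = {\<one>}" by blast
  then show ?thesis unfolding nilpotent_group_def using is_group by blast
qed

end


lemma solve_mod_coprime:
  fixes a n :: nat
  assumes "coprime a n" "a \<noteq> 0"
  shows "\<exists>x. (a * x) mod n = Suc 0 mod n"
proof -
  obtain x y where "a * x = n * y + gcd a n" using bezout_nat[OF assms(2)] by blast
  then have "a * x = Suc 0 + n * y" using assms(1) by (simp add: coprime_iff_gcd_eq_1)
  then have "(a * x) mod n = Suc 0 mod n" using mod_mult_self2[of "Suc 0" n y] by simp
  then show ?thesis by blast
qed


context group begin

lemma subgroup_nat_pow_closed:
  assumes "subgroup H G" "h \<in> H" shows "h [^] (n::nat) \<in> H"
  using subgroup_int_pow_closed[OF assms, of "int n"] by (simp add: int_pow_int)

lemma pow_mod_order: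
  assumes "x \<in> carrier G" "x [^] (k::nat) = \<one>"
  shows "x [^] n = x [^] (n mod k)"
proof -
  have e1: "x [^] n = x [^] (n mod k + k * (n div k))" by simp
  have e2: "x [^] (n mod k + k * (n div k)) = x [^] (n mod k) \<otimes> x [^] (k * (n div k))"
    by (rule nat_pow_mult[OF assms(1), symmetric])
  have e3: "x [^] (k * (n div k)) = (x [^] k) [^] (n div k)" by (rule nat_pow_pow[OF assms(1), symmetric])
  have e4: "(x [^] k) [^] (n div k) = \<one>" by (simp only: assms(2) nat_pow_one)
  have "x [^] n = x [^] (n mod k) \<otimes> \<one>" using e1 e2 e3 e4 by metis
  then show ?thesis using assms(1) by simp
qed

lemma elem_of_prime_order:
  assumes fin: "finite (carrier G)" and p: "Factorial_Ring.prime p" and pd: "p dvd order G"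
  shows "\<exists>x\<in>carrier G. ord x = p"
proof -
  obtain P a m where P: "subgroup P G" "card P = p ^ a" "order G = p ^ a * m" "\<not> p dvd m"
    using sylow_exists[OF fin p] by blast
  have Ps: "P \<subseteq> carrier G" using subgroup.subset[OF P(1)] .
  have finP: "finite P" using fin Ps finite_subset by blast
  have "a \<noteq> 0"
  proof
    assume "a = 0"
    then show False using pd P(3,4) by simp
  qed
  then have "1 < p ^ a" using prime_gt_1_nat[OF p] one_less_power[of p a] by simp
  then have "card P \<noteq> 1" using P(2) by (metis less_irrefl_nat)
  have "\<one> \<in> P" using subgroup.one_closed[OF P(1)] .
  have "P \<noteq> {\<one>}"
  proof
    assume "P = {\<one>}"
    then have "card P = 1" by simp
    then show False using \<open>card P \<noteq> 1\<close> by simp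
  qed
  then obtain x where x: "x \<in> P" "x \<noteq> \<one>" using \<open>\<one> \<in> P\<close> by blast
  have xc: "x \<in> carrier G" using x Ps by blast
  have "x [^] card P = \<one>" using pow_card_subgroup[OF P(1) x(1) finP] .
  then have "ord x dvd p ^ a" using pow_eq_id[OF xc] P(2) by simp
  then obtain i where i: "i \<le> a" "ord x = p ^ i" using divides_primepow_nat[OF p] by blast
  have "i \<noteq> 0" using i x(2) ord_eq_1[OF xc] by auto
  then obtain j where j: "i = Suc j" using not0_implies_Suc by blast
  have "p ^ j dvd ord x" using i j by simp
  moreover have "p ^ j \<noteq> 0" using p by (simp add: prime_gt_0_nat)
  ultimately have "ord (x [^] (p ^ j)) = ord x div p ^ j" using ord_pow[OF xc] by blast
  also have "\<dots> = p" using i j p by (simp add: prime_gt_0_nat)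
  finally show ?thesis using xc by blast
qed

end

lemma DirProd_pow:
  assumes "group H" "group K" "h \<in> carrier H" "k \<in> carrier K"
  shows "(h, k) [^]\<^bsub>H \<times>\<times> K\<^esub> (n::nat) = (h [^]\<^bsub>H\<^esub> n, k [^]\<^bsub>K\<^esub> n)"
  by (induction n) (simp_all add: assms)

lemma coprime_subgroup_prod:
  fixes H :: "('a, 'b) monoid_scheme" and K :: "('c, 'd) monoid_scheme"
  assumes H: "group H" and K: "group K" and fH: "finite (carrier H)" and fK: "finite (carrier K)"
    and cop: "coprime (order H) (order K)"
    and Y: "subgroup Y (H \<times>\<times> K)"
  shows "Y = fst ` Y \<times> snd ` Y" "subgroup (fst ` Y) H" "subgroup (snd ` Y) K"
proof -
  interpret H: group H by fact
  interpret K: group K by fact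
  interpret G: group "H \<times>\<times> K" using DirProd_group H K by blast
  have Ys: "Y \<subseteq> carrier H \<times> carrier K" using subgroup.subset[OF Y] by simp
  have oK: "order K \<noteq> 0" and oH: "order H \<noteq> 0" using fH fK H.order_gt_0_iff_finite K.order_gt_0_iff_finite by auto
  obtain s where s: "(order K * s) mod order H = Suc 0 mod order H"
    using solve_mod_coprime[OF _ oK] cop by (auto simp: coprime_commute)
  obtain t where t: "(order H * t) mod order K = Suc 0 mod order K"
    using solve_mod_coprime[OF cop oH] by blast
  have left: "(a, \<one>\<^bsub>K\<^esub>) \<in> Y" if ab: "(a, b) \<in> Y" for a b
  proof -
    have ac: "a \<in> carrier H" and bc: "b \<in> carrier K" using ab Ys by auto
    have "(a, b) [^]\<^bsub>H \<times>\<times> K\<^esub> (order K * s) \<in> Y" using G.subgroup_nat_pow_closed[OF Y ab] .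
    moreover have "(a, b) [^]\<^bsub>H \<times>\<times> K\<^esub> (order K * s) = (a [^]\<^bsub>H\<^esub> (order K * s), b [^]\<^bsub>K\<^esub> (order K * s))"
      using DirProd_pow[OF H K ac bc] .
    moreover have "b [^]\<^bsub>K\<^esub> (order K * s) = \<one>\<^bsub>K\<^esub>"
      using bc by (simp add: K.nat_pow_pow[symmetric] K.pow_order_eq_1)
    moreover have "a [^]\<^bsub>H\<^esub> (order K * s) = a"
    proof -
      have "a [^]\<^bsub>H\<^esub> (order K * s) = a [^]\<^bsub>H\<^esub> ((order K * s) mod order H)"
        using H.pow_mod_order[OF ac H.pow_order_eq_1[OF ac]] .
      also have "(order K * s) mod order H = Suc 0 mod order H" using s .
      also have "a [^]\<^bsub>H\<^esub> (Suc 0 mod order H) = a"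
      proof (cases "order H = 1")
        case True
        then have "carrier H = {\<one>\<^bsub>H\<^esub>}" using H.order_one_triv_iff by simp
        then show ?thesis using ac by simp
      next
        case False
        then have "Suc 0 mod order H = 1" using fH H.order_gt_0_iff_finite by (simp add: mod_if)
        then show ?thesis using ac by simp
      qed
      finally show ?thesis .
    qed
    ultimately show ?thesis by simp
  qed
  have right: "(\<one>\<^bsub>H\<^esub>, b) \<in> Y" if ab: "(a, b) \<in> Y" for a b
  proof -
    have ac: "a \<in> carrier H" and bc: "b \<in> carrier K" using ab Ys by auto
    have "(a, b) [^]\<^bsub>H \<times>\<times> K\<^esub> (order H * t) \<in> Y" using G.subgroup_nat_pow_closed[OF Y ab] .
    moreover have "(a, b) [^]\<^bsub>H \<times>\<times> K\<^esub> (order H * t) = (a [^]\<^bsub>H\<^esub> (order H * t), b [^]\<^bsub>K\<^esub> (order H * t))"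
      using DirProd_pow[OF H K ac bc] .
    moreover have "a [^]\<^bsub>H\<^esub> (order H * t) = \<one>\<^bsub>H\<^esub>"
      using ac by (simp add: H.nat_pow_pow[symmetric] H.pow_order_eq_1)
    moreover have "b [^]\<^bsub>K\<^esub> (order H * t) = b"
    proof -
      have "b [^]\<^bsub>K\<^esub> (order H * t) = b [^]\<^bsub>K\<^esub> ((order H * t) mod order K)"
        using K.pow_mod_order[OF bc K.pow_order_eq_1[OF bc]] .
      also have "(order H * t) mod order K = Suc 0 mod order K" using t .
      also have "b [^]\<^bsub>K\<^esub> (Suc 0 mod order K) = b"
      proof (cases "order K = 1")
        case True
        then have "carrier K = {\<one>\<^bsub>K\<^esub>}" using K.order_one_triv_iff by simp
        then show ?thesis using bc by simp
      next
        case False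
        then have "Suc 0 mod order K = 1" using fK K.order_gt_0_iff_finite by (simp add: mod_if)
        then show ?thesis using bc by simp
      qed
      finally show ?thesis .
    qed
    ultimately show ?thesis by simp
  qed
  show "Y = fst ` Y \<times> snd ` Y"
  proof
    show "Y \<subseteq> fst ` Y \<times> snd ` Y" by force
    show "fst ` Y \<times> snd ` Y \<subseteq> Y"
    proof (rule subsetI)
      fix x assume "x \<in> fst ` Y \<times> snd ` Y"
      then obtain a b a' b' where x: "x = (a, b')" and ab: "(a, b) \<in> Y" and ab': "(a', b') \<in> Y" by force
      have "(a, \<one>\<^bsub>K\<^esub>) \<otimes>\<^bsub>H \<times>\<times> K\<^esub> (\<one>\<^bsub>H\<^esub>, b') \<in> Y"
        using subgroup.m_closed[OF Y left[OF ab] right[OF ab']] .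
      moreover have "a \<in> carrier H" "b' \<in> carrier K" using ab ab' Ys by auto
      ultimately show "x \<in> Y" using x by simp
    qed
  qed
  show "subgroup (fst ` Y) H"
  proof (rule H.subgroupI)
    show "fst ` Y \<subseteq> carrier H" using Ys by auto
    show "fst ` Y \<noteq> {}" using subgroup.one_closed[OF Y] by auto
  next
    fix a assume "a \<in> fst ` Y"
    then obtain b where ab: "(a, b) \<in> Y" by auto
    have "inv\<^bsub>H \<times>\<times> K\<^esub> (a, b) \<in> Y" using subgroup.m_inv_closed[OF Y ab] .
    moreover have "a \<in> carrier H" "b \<in> carrier K" using ab Ys by auto
    ultimately show "inv\<^bsub>H\<^esub> a \<in> fst ` Y" using H K by (auto simp: image_iff) (metis fst_conv)
  next
    fix a a' assume "a \<in> fst ` Y" "a' \<in> fst ` Y"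
    then obtain b b' where ab: "(a, b) \<in> Y" and ab': "(a', b') \<in> Y" by auto
    have "(a, b) \<otimes>\<^bsub>H \<times>\<times> K\<^esub> (a', b') \<in> Y" using subgroup.m_closed[OF Y ab ab'] .
    then show "a \<otimes>\<^bsub>H\<^esub> a' \<in> fst ` Y" by (auto simp: image_iff) (metis fst_conv)
  qed
  show "subgroup (snd ` Y) K"
  proof (rule K.subgroupI)
    show "snd ` Y \<subseteq> carrier K" using Ys by auto
    show "snd ` Y \<noteq> {}" using subgroup.one_closed[OF Y] by auto
  next
    fix b assume "b \<in> snd ` Y"
    then obtain a where ab: "(a, b) \<in> Y" by auto
    have "inv\<^bsub>H \<times>\<times> K\<^esub> (a, b) \<in> Y" using subgroup.m_inv_closed[OF Y ab] .
    moreover have "a \<in> carrier H" "b \<in> carrier K" using ab Ys by auto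
    ultimately show "inv\<^bsub>K\<^esub> b \<in> snd ` Y" using H K by (auto simp: image_iff) (metis snd_conv)
  next
    fix b b' assume "b \<in> snd ` Y" "b' \<in> snd ` Y"
    then obtain a a' where ab: "(a, b) \<in> Y" and ab': "(a', b') \<in> Y" by auto
    have "(a, b) \<otimes>\<^bsub>H \<times>\<times> K\<^esub> (a', b') \<in> Y" using subgroup.m_closed[OF Y ab ab'] .
    then show "b \<otimes>\<^bsub>K\<^esub> b' \<in> snd ` Y" by (auto simp: image_iff) (metis snd_conv)
  qed
qed


lemma (in group) Fam_member_prop:
  assumes "c \<in> Fam G" "A \<in> c"
  shows "A = {\<one>} \<or> A = carrier G \<or> normalizer G A \<noteq> A"
proof -
  consider "c \<in> Dset G" | "c = {{\<one>}}" | "c = {carrier G}" using assms(1) unfolding Fam_def by blast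
  then show ?thesis
  proof cases
    case 1
    then obtain Y0 where Y0: "subgroup Y0 G" "normalizer G Y0 \<noteq> Y0" "c = cls Y0" unfolding Dset_def by blast
    then show ?thesis using cls_memD(3)[OF Y0(1)] assms(2) by blast
  next
    case 2
    then show ?thesis using assms(2) by simp
  next
    case 3
    then show ?thesis using assms(2) by simp
  qed
qed

lemma Phi_mem:
  assumes "Y \<in> Phi c1 c2"
  shows "\<exists>A B. Y = A \<times> B \<and> A \<in> c1 \<and> B \<in> c2"
  using assms unfolding Phi_def by blast

lemma wit_H:
  fixes H :: "('a, 'b) monoid_scheme" and K :: "('c, 'd) monoid_scheme"
  assumes H: "group H" and K: "group K" and fH: "finite (carrier H)" and fK: "finite (carrier K)"
    and nH: "carrier H \<noteq> {\<one>\<^bsub>H\<^esub>}" and nK: "carrier K \<noteq> {\<one>\<^bsub>K\<^esub>}"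
    and A: "subgroup A H" "A \<noteq> carrier H" "normalizer H A = A"
  shows "\<exists>c. c \<in> Dset (H \<times>\<times> K) \<and> c \<notin> (\<lambda>(c1, c2). Phi c1 c2) ` (Fam H \<times> Fam K)"
proof -
  interpret H: group H by fact
  interpret K: group K by fact
  interpret G: group "H \<times>\<times> K" using DirProd_group H K by blast
  have As: "A \<subseteq> carrier H" using subgroup.subset[OF A(1)] .
  have Ane: "A \<noteq> {}" using subgroup.one_closed[OF A(1)] by blast
  have A1: "A \<noteq> {\<one>\<^bsub>H\<^esub>}" using A(3) H.normalizer_one nH by auto
  define Y where "Y = A \<times> {\<one>\<^bsub>K\<^esub>}"
  have Ysub: "subgroup Y (H \<times>\<times> K)" unfolding Y_def using DirProd_subgroups[OF H A(1) K K.triv_subgroup] .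
  have Y1: "Y \<noteq> {\<one>\<^bsub>H \<times>\<times> K\<^esub>}" unfolding Y_def using A1 by (auto simp: times_eq_iff)
  have "normalizer (H \<times>\<times> K) Y = A \<times> carrier K"
    unfolding Y_def using normalizer_prod[OF H K As _ Ane] K.normalizer_one A(3) by simp
  then have YN: "normalizer (H \<times>\<times> K) Y \<noteq> Y" unfolding Y_def using nK Ane by (auto simp: times_eq_iff)
  have cD: "G.cls Y \<in> Dset (H \<times>\<times> K)" unfolding Dset_def using Ysub Y1 YN by blast
  have "G.cls Y \<notin> (\<lambda>(c1, c2). Phi c1 c2) ` (Fam H \<times> Fam K)"
  proof
    assume "G.cls Y \<in> (\<lambda>(c1, c2). Phi c1 c2) ` (Fam H \<times> Fam K)"
    then obtain c1 c2 where c: "c1 \<in> Fam H" "c2 \<in> Fam K" "G.cls Y = Phi c1 c2" by auto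
    have "Y \<in> Phi c1 c2" using c(3) G.self_in_cls subgroup.subset[OF Ysub] by metis
    then obtain A' B' where AB: "Y = A' \<times> B'" "A' \<in> c1" "B' \<in> c2" using Phi_mem by blast
    have "A' = A" using AB(1) Ane unfolding Y_def by (auto simp: times_eq_iff)
    then have "A = {\<one>\<^bsub>H\<^esub>} \<or> A = carrier H \<or> normalizer H A \<noteq> A"
      using H.Fam_member_prop[OF c(1)] AB(2) by blast
    then show False using A1 A by blast
  qed
  then show ?thesis using cD by blast
qed

lemma wit_K:
  fixes H :: "('a, 'b) monoid_scheme" and K :: "('c, 'd) monoid_scheme"
  assumes H: "group H" and K: "group K" and fH: "finite (carrier H)" and fK: "finite (carrier K)"
    and nH: "carrier H \<noteq> {\<one>\<^bsub>H\<^esub>}" and nK: "carrier K \<noteq> {\<one>\<^bsub>K\<^esub>}"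
    and B: "subgroup B K" "B \<noteq> carrier K" "normalizer K B = B"
  shows "\<exists>c. c \<in> Dset (H \<times>\<times> K) \<and> c \<notin> (\<lambda>(c1, c2). Phi c1 c2) ` (Fam H \<times> Fam K)"
proof -
  interpret H: group H by fact
  interpret K: group K by fact
  interpret G: group "H \<times>\<times> K" using DirProd_group H K by blast
  have Bs: "B \<subseteq> carrier K" using subgroup.subset[OF B(1)] .
  have Bne: "B \<noteq> {}" using subgroup.one_closed[OF B(1)] by blast
  have B1: "B \<noteq> {\<one>\<^bsub>K\<^esub>}" using B(3) K.normalizer_one nK by auto
  define Y where "Y = {\<one>\<^bsub>H\<^esub>} \<times> B"
  have Ysub: "subgroup Y (H \<times>\<times> K)" unfolding Y_def using DirProd_subgroups[OF H H.triv_subgroup K B(1)] .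
  have Y1: "Y \<noteq> {\<one>\<^bsub>H \<times>\<times> K\<^esub>}" unfolding Y_def using B1 by (auto simp: times_eq_iff)
  have "normalizer (H \<times>\<times> K) Y = carrier H \<times> B"
    unfolding Y_def using normalizer_prod[OF H K _ Bs _ Bne] H.normalizer_one B(3) by simp
  then have YN: "normalizer (H \<times>\<times> K) Y \<noteq> Y" unfolding Y_def using nH Bne by (auto simp: times_eq_iff)
  have cD: "G.cls Y \<in> Dset (H \<times>\<times> K)" unfolding Dset_def using Ysub Y1 YN by blast
  have "G.cls Y \<notin> (\<lambda>(c1, c2). Phi c1 c2) ` (Fam H \<times> Fam K)"
  proof
    assume "G.cls Y \<in> (\<lambda>(c1, c2). Phi c1 c2) ` (Fam H \<times> Fam K)"
    then obtain c1 c2 where c: "c1 \<in> Fam H" "c2 \<in> Fam K" "G.cls Y = Phi c1 c2" by auto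
    have "Y \<in> Phi c1 c2" using c(3) G.self_in_cls subgroup.subset[OF Ysub] by metis
    then obtain A' B' where AB: "Y = A' \<times> B'" "A' \<in> c1" "B' \<in> c2" using Phi_mem by blast
    have "B' = B" using AB(1) Bne unfolding Y_def by (auto simp: times_eq_iff)
    then have "B = {\<one>\<^bsub>K\<^esub>} \<or> B = carrier K \<or> normalizer K B \<noteq> B"
      using K.Fam_member_prop[OF c(2)] AB(3) by blast
    then show False using B1 B by blast
  qed
  then show ?thesis using cD by blast
qed

lemma wit_p:
  fixes H :: "('a, 'b) monoid_scheme" and K :: "('c, 'd) monoid_scheme"
  assumes H: "group H" and K: "group K" and fH: "finite (carrier H)" and fK: "finite (carrier K)"
    and p: "Factorial_Ring.prime p" "p dvd order H" "p dvd order K"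
  shows "\<exists>c. c \<in> Dset (H \<times>\<times> K) \<and> c \<notin> (\<lambda>(c1, c2). Phi c1 c2) ` (Fam H \<times> Fam K)"
proof -
  interpret H: group H by fact
  interpret K: group K by fact
  interpret G: group "H \<times>\<times> K" using DirProd_group H K by blast
  obtain h where h: "h \<in> carrier H" "H.ord h = p" using H.elem_of_prime_order[OF fH p(1,2)] by blast
  obtain k where k: "k \<in> carrier K" "K.ord k = p" using K.elem_of_prime_order[OF fK p(1,3)] by blast
  have h1: "h \<noteq> \<one>\<^bsub>H\<^esub>" using H.ord_eq_1[OF h(1)] h(2) p(1) by auto
  have fG: "finite (carrier (H \<times>\<times> K))" using fH fK by simp
  define x where "x = (h, k)"
  have xc: "x \<in> carrier (H \<times>\<times> K)" unfolding x_def using h k by simp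
  define Y where "Y = generate (H \<times>\<times> K) {x}"
  have Yeq: "Y = {x [^]\<^bsub>H \<times>\<times> K\<^esub> n | n. n \<in> (UNIV :: nat set)}"
    unfolding Y_def using G.generate_pow_on_finite_carrier[OF fG xc] .
  have Ysub: "subgroup Y (H \<times>\<times> K)" unfolding Y_def using G.generate_is_subgroup xc by simp
  have Ys: "Y \<subseteq> carrier (H \<times>\<times> K)" using subgroup.subset[OF Ysub] .
  have xY: "x \<in> Y" unfolding Y_def by (rule generate.incl) simp
  have powx: "x [^]\<^bsub>H \<times>\<times> K\<^esub> n = (h [^]\<^bsub>H\<^esub> n, k [^]\<^bsub>K\<^esub> n)" for n :: nat
    unfolding x_def using DirProd_pow[OF H K h(1) k(1)] .
  have Y1: "Y \<noteq> {\<one>\<^bsub>H \<times>\<times> K\<^esub>}" using xY h1 unfolding x_def by auto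
  define w where "w = (h, \<one>\<^bsub>K\<^esub>)"
  have wc: "w \<in> carrier (H \<times>\<times> K)" unfolding w_def using h by simp
  have conjw: "w \<otimes>\<^bsub>H \<times>\<times> K\<^esub> y \<otimes>\<^bsub>H \<times>\<times> K\<^esub> inv\<^bsub>H \<times>\<times> K\<^esub> w = y" if y: "y \<in> Y" for y
  proof -
    obtain n :: nat where n: "y = (h [^]\<^bsub>H\<^esub> n, k [^]\<^bsub>K\<^esub> n)" using y Yeq powx by auto
    have "h \<otimes>\<^bsub>H\<^esub> h [^]\<^bsub>H\<^esub> n = h [^]\<^bsub>H\<^esub> n \<otimes>\<^bsub>H\<^esub> h"
      using H.nat_pow_comm[of h 1 n] h(1) by simp
    then have "h \<otimes>\<^bsub>H\<^esub> h [^]\<^bsub>H\<^esub> n \<otimes>\<^bsub>H\<^esub> inv\<^bsub>H\<^esub> h = h [^]\<^bsub>H\<^esub> n"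
      using h(1) by simp
    then show ?thesis unfolding w_def n using h k H K by simp
  qed
  have "(\<lambda>y. w \<otimes>\<^bsub>H \<times>\<times> K\<^esub> y \<otimes>\<^bsub>H \<times>\<times> K\<^esub> inv\<^bsub>H \<times>\<times> K\<^esub> w) ` Y = Y"
    using conjw by (simp add: image_def)
  then have wN: "w \<in> normalizer (H \<times>\<times> K) Y" using G.normalizer_iff2[OF Ys] wc by blast
  have wY: "w \<notin> Y"
  proof
    assume "w \<in> Y"
    then obtain n :: nat where n: "(h, \<one>\<^bsub>K\<^esub>) = (h [^]\<^bsub>H\<^esub> n, k [^]\<^bsub>K\<^esub> n)" using Yeq powx unfolding w_def by auto
    then have "k [^]\<^bsub>K\<^esub> n = \<one>\<^bsub>K\<^esub>" by simp
    then have "p dvd n" using K.pow_eq_id[OF k(1)] k(2) by simp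
    then have "h [^]\<^bsub>H\<^esub> n = \<one>\<^bsub>H\<^esub>" using H.pow_eq_id[OF h(1)] h(2) by simp
    then show False using n h1 by simp
  qed
  have YN: "normalizer (H \<times>\<times> K) Y \<noteq> Y" using wN wY by blast
  have cD: "G.cls Y \<in> Dset (H \<times>\<times> K)" unfolding Dset_def using Ysub Y1 YN by blast
  have "G.cls Y \<notin> (\<lambda>(c1, c2). Phi c1 c2) ` (Fam H \<times> Fam K)"
  proof
    assume "G.cls Y \<in> (\<lambda>(c1, c2). Phi c1 c2) ` (Fam H \<times> Fam K)"
    then obtain c1 c2 where c: "G.cls Y = Phi c1 c2" by auto
    have "Y \<in> Phi c1 c2" using c G.self_in_cls Ys by metis
    then obtain A' B' where AB: "Y = A' \<times> B'" using Phi_mem by blast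
    have "(h, k) \<in> A' \<times> B'" using xY AB unfolding x_def by simp
    moreover have "(\<one>\<^bsub>H\<^esub>, \<one>\<^bsub>K\<^esub>) \<in> A' \<times> B'" using subgroup.one_closed[OF Ysub] AB by simp
    ultimately have "w \<in> A' \<times> B'" unfolding w_def by simp
    then show False using wY AB by simp
  qed
  then show ?thesis using cD by blast
qed


theorem mainTheorem6:
  fixes H :: "('a, 'b) monoid_scheme" and K :: "('c, 'd) monoid_scheme"
  assumes "group H" and "group K"
    and "finite (carrier H)" and "finite (carrier K)"
    and "carrier H \<noteq> {\<one>\<^bsub>H\<^esub>}" and "carrier K \<noteq> {\<one>\<^bsub>K\<^esub>}"
  shows "D_count (H \<times>\<times> K) \<ge> (D_count H + 2) * (D_count K + 2) - 2
    \<and> (D_count (H \<times>\<times> K) = (D_count H + 2) * (D_count K + 2) - 2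
         \<longleftrightarrow> nilpotent_group H \<and> nilpotent_group K \<and> coprime (order H) (order K))"
proof -
  note H = assms(1) and K = assms(2) and fH = assms(3) and fK = assms(4) and nH = assms(5) and nK = assms(6)
  interpret H: group H by fact
  interpret K: group K by fact
  interpret G: group "H \<times>\<times> K" using DirProd_group H K by blast
  define S where "S = Fam H \<times> Fam K - {({{\<one>\<^bsub>H\<^esub>}}, {{\<one>\<^bsub>K\<^esub>}}), ({carrier H}, {carrier K})}"
  define I where "I = (\<lambda>(c1, c2). Phi c1 c2) ` S"
  have inj: "inj_on (\<lambda>(c1, c2). Phi c1 c2) S" unfolding S_def by (rule count_main(1)[OF H K fH fK nH nK])
  have cS: "card S = (D_count H + 2) * (D_count K + 2) - 2" unfolding S_def by (rule count_main(2)[OF H K fH fK nH nK])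
  have ID: "I \<subseteq> Dset (H \<times>\<times> K)" unfolding I_def S_def by (rule count_main(3)[OF H K fH fK nH nK])
  have fG: "finite (carrier (H \<times>\<times> K))" using fH fK by simp
  have finD: "finite (Dset (H \<times>\<times> K))" using G.finite_Dset[OF fG] .
  have cI: "card I = card S" unfolding I_def using card_image[OF inj] .
  have DG: "D_count (H \<times>\<times> K) = card (Dset (H \<times>\<times> K))" by (rule D_count_Dset)
  have ineq: "card I \<le> card (Dset (H \<times>\<times> K))" using card_mono[OF finD ID] .
  have eqiff: "D_count (H \<times>\<times> K) = (D_count H + 2) * (D_count K + 2) - 2 \<longleftrightarrow> I = Dset (H \<times>\<times> K)"
  proof
    assume "D_count (H \<times>\<times> K) = (D_count H + 2) * (D_count K + 2) - 2"
    then have "card I = card (Dset (H \<times>\<times> K))" using DG cI cS by simp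
    then show "I = Dset (H \<times>\<times> K)" using card_subset_eq[OF finD ID] by simp
  next
    assume "I = Dset (H \<times>\<times> K)"
    then show "D_count (H \<times>\<times> K) = (D_count H + 2) * (D_count K + 2) - 2" using DG cI cS by simp
  qed
  have IFF: "I \<subseteq> (\<lambda>(c1, c2). Phi c1 c2) ` (Fam H \<times> Fam K)" unfolding I_def S_def by auto
  have right: "I = Dset (H \<times>\<times> K) \<longleftrightarrow> nilpotent_group H \<and> nilpotent_group K \<and> coprime (order H) (order K)"
  proof
    assume IeqD: "I = Dset (H \<times>\<times> K)"
    have nilH: "nilpotent_group H"
    proof (rule ccontr)
      assume nn: "\<not> nilpotent_group H"
      have "\<not> (\<forall>A. subgroup A H \<longrightarrow> A \<noteq> carrier H \<longrightarrow> normalizer H A \<noteq> A)"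
        using H.NC_nilpotent[OF fH] nn by blast
      then obtain A where A: "subgroup A H" "A \<noteq> carrier H" "normalizer H A = A" by blast
      obtain c where "c \<in> Dset (H \<times>\<times> K)" "c \<notin> (\<lambda>(c1, c2). Phi c1 c2) ` (Fam H \<times> Fam K)"
        using wit_H[OF H K fH fK nH nK A] by blast
      then show False using IeqD IFF by blast
    qed
    have nilK: "nilpotent_group K"
    proof (rule ccontr)
      assume nn: "\<not> nilpotent_group K"
      have "\<not> (\<forall>B. subgroup B K \<longrightarrow> B \<noteq> carrier K \<longrightarrow> normalizer K B \<noteq> B)"
        using K.NC_nilpotent[OF fK] nn by blast
      then obtain B where B: "subgroup B K" "B \<noteq> carrier K" "normalizer K B = B" by blast
      obtain c where "c \<in> Dset (H \<times>\<times> K)" "c \<notin> (\<lambda>(c1, c2). Phi c1 c2) ` (Fam H \<times> Fam K)"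
        using wit_K[OF H K fH fK nH nK B] by blast
      then show False using IeqD IFF by blast
    qed
    have cop: "coprime (order H) (order K)"
    proof (rule ccontr)
      assume nc: "\<not> coprime (order H) (order K)"
      then have "gcd (order H) (order K) \<noteq> 1" by (simp add: coprime_iff_gcd_eq_1)
      then obtain p where p: "Factorial_Ring.prime p" "p dvd gcd (order H) (order K)"
        using prime_factor_nat by blast
      then have pd: "p dvd order H" "p dvd order K" by simp_all
      obtain c where "c \<in> Dset (H \<times>\<times> K)" "c \<notin> (\<lambda>(c1, c2). Phi c1 c2) ` (Fam H \<times> Fam K)"
        using wit_p[OF H K fH fK p(1) pd] by blast
      then show False using IeqD IFF by blast
    qed
    show "nilpotent_group H \<and> nilpotent_group K \<and> coprime (order H) (order K)" using nilH nilK cop by blast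
  next
    assume a: "nilpotent_group H \<and> nilpotent_group K \<and> coprime (order H) (order K)"
    have "Dset (H \<times>\<times> K) \<subseteq> I"
    proof
      fix c assume "c \<in> Dset (H \<times>\<times> K)"
      then obtain Y where Y: "subgroup Y (H \<times>\<times> K)" "Y \<noteq> {\<one>\<^bsub>H \<times>\<times> K\<^esub>}"
        "normalizer (H \<times>\<times> K) Y \<noteq> Y" "c = G.cls Y" unfolding Dset_def by blast
      define A where "A = fst ` Y"
      define B where "B = snd ` Y"
      have YAB: "Y = A \<times> B" and As: "subgroup A H" and Bs: "subgroup B K"
        unfolding A_def B_def using coprime_subgroup_prod[OF H K fH fK _ Y(1)] a by blast+
      have Asub: "A \<subseteq> carrier H" using subgroup.subset[OF As] .
      have Bsub: "B \<subseteq> carrier K" using subgroup.subset[OF Bs] .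
      have Ane: "A \<noteq> {}" using subgroup.one_closed[OF As] by blast
      have Bne: "B \<noteq> {}" using subgroup.one_closed[OF Bs] by blast
      have cAB: "c = Phi (H.cls A) (K.cls B)" using Y(4) YAB Phi_cls[OF H K Asub Bsub] by simp
      have FA: "H.cls A \<in> Fam H"
      proof (rule H.cls_in_Fam[OF As])
        show "A = {\<one>\<^bsub>H\<^esub>} \<or> A = carrier H \<or> normalizer H A \<noteq> A"
          using H.nilpotent_NC[OF _ As] a by blast
      qed
      have FB: "K.cls B \<in> Fam K"
      proof (rule K.cls_in_Fam[OF Bs])
        show "B = {\<one>\<^bsub>K\<^esub>} \<or> B = carrier K \<or> normalizer K B \<noteq> B"
          using K.nilpotent_NC[OF _ Bs] a by blast
      qed
      have n1: "(H.cls A, K.cls B) \<noteq> ({{\<one>\<^bsub>H\<^esub>}}, {{\<one>\<^bsub>K\<^esub>}})"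
      proof
        assume "(H.cls A, K.cls B) = ({{\<one>\<^bsub>H\<^esub>}}, {{\<one>\<^bsub>K\<^esub>}})"
        then have "A \<in> {{\<one>\<^bsub>H\<^esub>}}" "B \<in> {{\<one>\<^bsub>K\<^esub>}}"
          using H.self_in_cls[OF Asub] K.self_in_cls[OF Bsub] by auto
        then have "Y = {\<one>\<^bsub>H \<times>\<times> K\<^esub>}" using YAB by simp
        then show False using Y(2) by blast
      qed
      have n2: "(H.cls A, K.cls B) \<noteq> ({carrier H}, {carrier K})"
      proof
        assume "(H.cls A, K.cls B) = ({carrier H}, {carrier K})"
        then have "A \<in> {carrier H}" "B \<in> {carrier K}"
          using H.self_in_cls[OF Asub] K.self_in_cls[OF Bsub] by auto
        then have "Y = carrier (H \<times>\<times> K)" using YAB by simp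
        then show False using Y(3) G.normalizer_carrier by simp
      qed
      have "(H.cls A, K.cls B) \<in> S" unfolding S_def using FA FB n1 n2 by blast
      then show "c \<in> I" unfolding I_def using cAB by force
    qed
    then show "I = Dset (H \<times>\<times> K)" using ID by blast
  qed
  show ?thesis using ineq DG cI cS eqiff right by simp
qed


end
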